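(* Let $f,g_1,\dots,g_m:\mathbb{R}^n\to\mathbb{R}^n$ be $C^\infty$ vector fields, $\check x\in\mathbb{R}^n$, $\Psi:\mathbb{R}\times\mathbb{R}^n\to\mathbb{R}$ of class $C^1$, and let the target be $\mathfrak{T}:=\{(t,x):\ \varphi_i(t,x)\le 0,\ \psi_j(t,x)=0,\ i=1,\dots,r_1,\ j=1,\dots,r_2\}$ with $\varphi_i,\psi_j:\mathbb{R}\times\mathbb{R}^n\to\mathbb{R}$ of class $C^1$. Let $(\bar T,\bar u,\bar x)$ be a feasible strict sense process and let $(\bar S,\bar w^0,\bar w,\bar y^0,\bar y):=\mathcal{I}(\bar T,\bar u,\bar x)$. Then $(\bar T,\bar u,\bar x)$ is a strict sense $L^\infty$-local minimizer for problem $(P)$ if and only if $(\bar S,\bar w^0,\bar w,\bar y^0,\bar y)$ is an $L^\infty$-local minimizer for problem $(P^e)$ among the feasible space-time processes $(S,w^0,w,y^0,y)$ with $w^0>0$ a.e.; that is, if and only if there exists $\delta'>0$ such that $\Psi((\bar y^0,\bar y)(\bar S))\le\Psi((y^0,y)(S))$ for all feasible space-time processes $(S,w^0,w,y^0,y)$ with $w^0>0$ a.e. on $[0,S]$ and ${\rm d}\big((y^0(S),y,\nu[w]),(\bar y^0(\bar S),\bar y,\nu[\bar w])\big)<\delta'$. Moreover $\Psi((\bar y^0,\bar y)(\bar S))=\Psi(\bar T,\bar x(\bar T))$.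
   Context: Strict sense process: $(T,u,x)$ with $T>0$, $u\in L^1([0,T],\mathbb{R}^m)$, $x$ the unique Carathéodory solution on $[0,T]$ of $\dot x=f(x)+\sum_{i=1}^m g_i(x)u^i$, $x(0)=\check x$; it is feasible if $(T,x(T))\in\mathfrak{T}$. Let $\mathcal{W}:=\{(w^0,w)\in\mathbb{R}\times\mathbb{R}^m:\ w^0\ge0,\ w^0+|w|=1\}$. Space-time process: $(S,w^0,w,y^0,y)$ with $S>0$, $(w^0,w)\in L^\infty([0,S],\mathcal{W})$, $(y^0,y)$ the unique Carathéodory solution on $[0,S]$ of $\frac{dy^0}{ds}=w^0$, $\frac{dy}{ds}=f(y)w^0+\sum_i g_i(y)w^i$, $(y^0,y)(0)=(0,\check x)$; feasible if $(y^0(S),y(S))\in\mathfrak{T}$. For $u\in L^1(I,\mathbb{R}^k)$, $\nu[u](t):=\int_0^t|u(\tau)|d\tau$. For $\tau_1,\tau_2>0$ and continuous $z_1:[0,\tau_1]\to\mathbb{R}^q$, $z_2:[0,\tau_2]\to\mathbb{R}^q$, ${\rm d}((\tau_1,z_1),(\tau_2,z_2)):=|\tau_1-\tau_2|+\|\tilde z_1-\tilde z_2\|_\infty$, where $\tilde z$ is the constant continuous extension of $z$ to $[0,+\infty)$. A feasible strict sense process $(\bar T,\bar u,\bar x)$ is a strict sense $L^\infty$-local minimizer of $(P)$ if there is $\delta>0$ with $\Psi(\bar T,\bar x(\bar T))\le\Psi(T,x(T))$ for every feasible strict sense process $(T,u,x)$ with ${\rm d}((T,x,\nu[u]),(\bar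 T,\bar x,\nu[\bar u]))<\delta$. The map $\mathcal{I}$: given a strict sense process $(T,u,x)$, let $\sigma(t):=\int_0^t(1+|u|)d\tau$, $S:=\sigma(T)$, $y^0:=\sigma^{-1}$, $w^0(s):=(1+|u(y^0(s))|)^{-1}$, $w(s):=w^0(s)u(y^0(s))$, $y(s):=x(y^0(s))$, and $\mathcal{I}(T,u,x):=(S,w^0,w,y^0,y)$, which is a space-time process with $w^0>0$ a.e. *)

theory Defs
  imports "HOL-Analysis.Analysis"
begin

definition partial_deriv :: "'n::finite \<Rightarrow> (real^'n \<Rightarrow> real^'k) \<Rightarrow> real^'n \<Rightarrow> real^'k" where
  "partial_deriv i h x = vector_derivative (\<lambda>t. h (x + t *\<^sub>R axis i 1)) (at 0)"

inductive_set higher_partials :: "(real^'n::finite \<Rightarrow> real^'k) \<Rightarrow> (real^'n \<Rightarrow> real^'k) set"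
  for f where
  base: "f \<in> higher_partials f"
| step: "h \<in> higher_partials f \<Longrightarrow> partial_deriv i h \<in> higher_partials f"

definition smooth_field :: "(real^'n::finite \<Rightarrow> real^'k) \<Rightarrow> bool" where
  "smooth_field f \<longleftrightarrow> (\<forall>h \<in> higher_partials f.
      continuous_on UNIV h \<and> (\<forall>i x. (\<lambda>t. h (x + t *\<^sub>R axis i 1)) differentiable (at 0)))"

definition C1_fun :: "('a::real_normed_vector \<Rightarrow> 'b::real_normed_vector) \<Rightarrow> bool" where
  "C1_fun F \<longleftrightarrow> (\<exists>F'. (\<forall>z. (F has_derivative blinfun_apply (F' z)) (at z)) \<and> continuous_on UNIV F')"

definition carath_sol :: "(real \<Rightarrow> 'a::euclidean_space \<Rightarrow> 'a) \<Rightarrow> 'a \<Rightarrow> real \<Rightarrow> (real \<Rightarrow> 'a) \<Rightarrow> bool" where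
  "carath_sol F a T z \<longleftrightarrow>
     (\<lambda>t. F t (z t)) absolutely_integrable_on {0..T} \<and>
     (\<forall>t\<in>{0..T}. z t = a + integral {0..t} (\<lambda>\<tau>. F \<tau> (z \<tau>)))"

definition unique_carath_sol :: "(real \<Rightarrow> 'a::euclidean_space \<Rightarrow> 'a) \<Rightarrow> 'a \<Rightarrow> real \<Rightarrow> (real \<Rightarrow> 'a) \<Rightarrow> bool" where
  "unique_carath_sol F a T z \<longleftrightarrow> carath_sol F a T z \<and>
     (\<forall>z'. carath_sol F a T z' \<longrightarrow> (\<forall>t\<in>{0..T}. z' t = z t))"

definition ctrl_dyn :: "(real^'n \<Rightarrow> real^'n) \<Rightarrow> ('m::finite \<Rightarrow> real^'n \<Rightarrow> real^'n)
    \<Rightarrow> real^'m \<Rightarrow> real^'n \<Rightarrow> real^'n" where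
  "ctrl_dyn f g v x = f x + (\<Sum>i\<in>UNIV. (v $ i) *\<^sub>R g i x)"

definition target :: "nat \<Rightarrow> (nat \<Rightarrow> real \<times> (real^'n) \<Rightarrow> real) \<Rightarrow> nat \<Rightarrow> (nat \<Rightarrow> real \<times> (real^'n) \<Rightarrow> real)
    \<Rightarrow> (real \<times> (real^'n)) set" where
  "target r1 \<phi> r2 \<psi> = {tx. (\<forall>i<r1. \<phi> i tx \<le> 0) \<and> (\<forall>j<r2. \<psi> j tx = 0)}"

definition strict_process :: "(real^'n \<Rightarrow> real^'n) \<Rightarrow> ('m::finite \<Rightarrow> real^'n \<Rightarrow> real^'n) \<Rightarrow> real^'n
    \<Rightarrow> real \<Rightarrow> (real \<Rightarrow> real^'m) \<Rightarrow> (real \<Rightarrow> real^'n) \<Rightarrow> bool" where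
  "strict_process f g x0 T u x \<longleftrightarrow> T > 0 \<and> u absolutely_integrable_on {0..T} \<and>
     unique_carath_sol (\<lambda>t z. ctrl_dyn f g (u t) z) x0 T x"

definition strict_feasible where
  "strict_feasible f g x0 \<TT> T u x \<longleftrightarrow> strict_process f g x0 T u x \<and> (T, x T) \<in> \<TT>"

definition st_dyn :: "(real^'n \<Rightarrow> real^'n) \<Rightarrow> ('m::finite \<Rightarrow> real^'n \<Rightarrow> real^'n)
    \<Rightarrow> real \<Rightarrow> real^'m \<Rightarrow> real \<times> (real^'n) \<Rightarrow> real \<times> (real^'n)" where
  "st_dyn f g a v yy = (a, a *\<^sub>R f (snd yy) + (\<Sum>i\<in>UNIV. (v $ i) *\<^sub>R g i (snd yy)))"

definition st_process :: "(real^'n \<Rightarrow> real^'n) \<Rightarrow> ('m::finite \<Rightarrow> real^'n \<Rightarrow> real^'n) \<Rightarrow> real^'n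
    \<Rightarrow> real \<Rightarrow> (real \<Rightarrow> real) \<Rightarrow> (real \<Rightarrow> real^'m) \<Rightarrow> (real \<Rightarrow> real) \<Rightarrow> (real \<Rightarrow> real^'n) \<Rightarrow> bool" where
  "st_process f g x0 S w0 w y0 y \<longleftrightarrow> S > 0 \<and>
     w0 \<in> borel_measurable (lebesgue_on {0..S}) \<and> w \<in> borel_measurable (lebesgue_on {0..S}) \<and>
     (AE s in lebesgue_on {0..S}. w0 s \<ge> 0 \<and> w0 s + norm (w s) = 1) \<and>
     unique_carath_sol (\<lambda>s yy. st_dyn f g (w0 s) (w s) yy) (0, x0) S (\<lambda>s. (y0 s, y s))"

definition st_feasible where
  "st_feasible f g x0 \<TT> S w0 w y0 y \<longleftrightarrow> st_process f g x0 S w0 w y0 y \<and> (y0 S, y S) \<in> \<TT>"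

definition nu :: "(real \<Rightarrow> 'a::real_normed_vector) \<Rightarrow> real \<Rightarrow> real" where
  "nu u t = integral {0..t} (\<lambda>\<tau>. norm (u \<tau>))"

definition cext :: "real \<Rightarrow> (real \<Rightarrow> 'a) \<Rightarrow> real \<Rightarrow> 'a" where
  "cext D z t = z (max 0 (min t D))"

text \<open>d((tau1,z1),(tau2,z2)) = |tau1 - tau2| + sup-norm of difference of extensions;
  D1, D2 are the domains [0,D1], [0,D2] of z1, z2.\<close>
definition dproc :: "real \<Rightarrow> real \<Rightarrow> (real \<Rightarrow> 'a::real_normed_vector) \<Rightarrow> real \<Rightarrow> real \<Rightarrow> (real \<Rightarrow> 'a) \<Rightarrow> real" where
  "dproc \<tau>1 D1 z1 \<tau>2 D2 z2 = \<bar>\<tau>1 - \<tau>2\<bar> + (SUP t\<in>{0..}. norm (cext D1 z1 t - cext D2 z2 t))"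

definition strict_Linf_local_min where
  "strict_Linf_local_min f g x0 \<TT> \<Psi> Tb ub xb \<longleftrightarrow>
     strict_feasible f g x0 \<TT> Tb ub xb \<and>
     (\<exists>\<delta>>0. \<forall>T u x. strict_feasible f g x0 \<TT> T u x \<and>
        dproc T T (\<lambda>t. (x t, nu u t)) Tb Tb (\<lambda>t. (xb t, nu ub t)) < \<delta>
        \<longrightarrow> \<Psi> (Tb, xb Tb) \<le> \<Psi> (T, x T))"

definition sigma_I :: "(real \<Rightarrow> 'a::real_normed_vector) \<Rightarrow> real \<Rightarrow> real" where
  "sigma_I u t = integral {0..t} (\<lambda>\<tau>. 1 + norm (u \<tau>))"

end

theory Submission
  imports Defs
begin

definition clamp :: "real \<Rightarrow> real \<Rightarrow> real" where "clamp L t = max 0 (min t L)"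

lemma clamp_in: "0 \<le> L \<Longrightarrow> clamp L t \<in> {0..L}" by (auto simp: clamp_def)
lemma clamp_id: "t \<in> {0..L} \<Longrightarrow> clamp L t = t" by (auto simp: clamp_def)
lemma continuous_clamp: "continuous_on A (clamp L)"
  unfolding clamp_def by (intro continuous_intros)

lemma phi_mono:
  fixes \<rho> :: "real \<Rightarrow> real"
  assumes nn: "\<And>t. 0 \<le> \<rho> t" and ri: "\<rho> integrable_on {0..A}"
    and "0 \<le> a" "a \<le> b" "b \<le> A"
  shows "integral {0..b} \<rho> - integral {0..a} \<rho> = integral {a..b} \<rho>"
    and "integral {0..a} \<rho> \<le> integral {0..b} \<rho>"
proof -
  have i: "\<rho> integrable_on {0..b}" using ri assms by (auto intro: integrable_on_subinterval)
  have "integral {0..a} \<rho> + integral {a..b} \<rho> = integral {0..b} \<rho>"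
    using Henstock_Kurzweil_Integration.integral_combine[OF assms(3,4) i] .
  then show "integral {0..b} \<rho> - integral {0..a} \<rho> = integral {a..b} \<rho>" by simp
  moreover have "0 \<le> integral {a..b} \<rho>"
    by (rule integral_nonneg) (use i assms in \<open>auto intro: integrable_on_subinterval nn\<close>)
  ultimately show "integral {0..a} \<rho> \<le> integral {0..b} \<rho>" by simp
qed

lemma phi_cont:
  fixes \<rho> :: "real \<Rightarrow> real"
  assumes ri: "\<rho> integrable_on {0..A}"
  shows "continuous_on {0..A} (\<lambda>t. integral {0..t} \<rho>)"
  using indefinite_integral_continuous_1[OF ri] .

lemma nn_ind:
  fixes \<rho> :: "real \<Rightarrow> real"
  assumes "E \<in> sets borel" "(\<rho> has_integral I) E" "\<And>t. 0 \<le> \<rho> t" "\<rho> \<in> borel_measurable borel"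
  shows "(\<integral>\<^sup>+ t. ennreal (indicator E t * \<rho> t) \<partial>lborel) = ennreal I"
proof -
  have "((\<lambda>t. indicator E t * \<rho> t) has_integral I) UNIV"
  proof -
    have "(\<lambda>t. indicator E t * \<rho> t) = (\<lambda>t. if t \<in> E then \<rho> t else 0)"
      by (auto simp: indicator_def)
    then show ?thesis using has_integral_restrict_UNIV[of E \<rho> I] assms(2) by simp
  qed
  moreover have "(\<lambda>t. indicator E t * \<rho> t) \<in> borel_measurable borel"
    using assms(1,4) by measurable
  ultimately show ?thesis
    using nn_integral_has_integral_lborel[of "\<lambda>t. indicator E t * \<rho> t" I] assms(3)
    by (auto simp: indicator_def)
qed

lemma cv_measure:
  fixes \<rho> :: "real \<Rightarrow> real"
  assumes rb: "\<rho> \<in> borel_measurable borel" and nn: "\<And>t. 0 \<le> \<rho> t"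
    and ri: "\<rho> integrable_on {0..A}" and A: "0 \<le> A"
  defines "\<phi> \<equiv> \<lambda>t. integral {0..t} \<rho>"
  shows "distr (density lborel (\<lambda>t. indicator {0..A} t * \<rho> t)) borel (\<lambda>t. \<phi> (clamp A t))
         = density lborel (indicator {0..\<phi> A})"
proof -
  let ?M = "density lborel (\<lambda>t. ennreal (indicator {0..A} t * \<rho> t))"
  let ?p = "\<lambda>t. \<phi> (clamp A t)"
  have pc0: "continuous_on {0..A} \<phi>" unfolding \<phi>_def by (rule phi_cont[OF ri])
  have pc: "continuous_on UNIV ?p"
    by (rule continuous_on_compose2[OF pc0 continuous_clamp]) (use clamp_in A in auto)
  then have pm[measurable]: "?p \<in> borel_measurable borel" by (rule borel_measurable_continuous_onI)
  have mono: "\<phi> a \<le> \<phi> b" if "0 \<le> a" "a \<le> b" "b \<le> A" for a b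
    unfolding \<phi>_def using phi_mono(2)[OF nn ri that] .
  have diff: "\<phi> b - \<phi> a = integral {a..b} \<rho>" if "0 \<le> a" "a \<le> b" "b \<le> A" for a b
    unfolding \<phi>_def using phi_mono(1)[OF nn ri that] .
  have p0: "\<phi> 0 = 0" unfolding \<phi>_def by simp
  have intab: "(\<rho> has_integral (\<phi> b - \<phi> a)) {a..b}" if "0 \<le> a" "a \<le> b" "b \<le> A" for a b
    using diff[OF that] integrable_on_subinterval[OF ri, of a b] that
    by (auto intro: integrable_integral)
  have rbm[measurable]: "(\<lambda>t. indicator {0..A} t * \<rho> t) \<in> borel_measurable borel" using rb by measurable
  have key: "emeasure ?M (?p -` {x<..}) = ennreal (measure lborel ({x<..} \<inter> {0..\<phi> A}))" for x
  proof -
    define E where "E = {t\<in>{0..A}. x < \<phi> t}"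
    have [measurable]: "?p -` {x<..} \<in> sets borel" using measurable_sets_borel[OF pm, of "{x<..}"] by auto
    have "emeasure ?M (?p -` {x<..}) = (\<integral>\<^sup>+ t. ennreal (indicator {0..A} t * \<rho> t) * indicator (?p -` {x<..}) t \<partial>lborel)"
      by (subst emeasure_density) auto
    also have "\<dots> = (\<integral>\<^sup>+ t. ennreal (indicator E t * \<rho> t) \<partial>lborel)"
    proof (intro nn_integral_cong)
      fix t
      show "ennreal (indicator {0..A} t * \<rho> t) * indicator (?p -` {x<..}) t = ennreal (indicator E t * \<rho> t)"
      proof (cases "t \<in> {0..A}")
        case True
        then have "clamp A t = t" by (rule clamp_id)
        then show ?thesis using True by (simp add: E_def indicator_def)
      next
        case False
        then have "t \<notin> E" by (auto simp: E_def)
        then show ?thesis using False by simp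
      qed
    qed
    also have "\<dots> = ennreal (measure lborel ({x<..} \<inter> {0..\<phi> A}))"
    proof (cases "x < 0")
      case True
      have "x < \<phi> t" if "t \<in> {0..A}" for t using mono[of 0 t] p0 True that by auto
      then have "E = {0..A}" by (auto simp: E_def)
      moreover have "{x<..} \<inter> {0..\<phi> A} = {0..\<phi> A}" using True by auto
      ultimately show ?thesis using nn_ind[of "{0..A}" \<rho> "\<phi> A - \<phi> 0"] intab[of 0 A] A nn rb p0 mono[of 0 A]
        by auto
    next
      case False
      show ?thesis
      proof (cases "\<phi> A \<le> x")
        case True
        have "\<phi> t \<le> x" if "t \<in> {0..A}" for t using mono[of t A] True that by auto
        then have "E = {}" by (force simp: E_def)
        moreover have "{x<..} \<inter> {0..\<phi> A} = {}" using True by auto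
        ultimately show ?thesis by simp
      next
        case False2: False
        obtain c0 where c0: "0 \<le> c0" "c0 \<le> A" "\<phi> c0 = x"
          using IVT'[of \<phi> 0 x A] pc0 p0 \<open>\<not> x < 0\<close> False2 A by auto
        define S where "S = {0..A} \<inter> \<phi> -` {..x}"
        have cS: "closed S" unfolding S_def by (rule continuous_closed_preimage[OF pc0]) auto
        have c0S: "c0 \<in> S" using c0 by (auto simp: S_def)
        have bS: "bdd_above S" unfolding S_def by (auto intro: bdd_aboveI[of _ A])
        define c where "c = Sup S"
        have cS': "c \<in> S" unfolding c_def using closed_contains_Sup[OF _ bS cS] c0S by auto
        have cc0: "c0 \<le> c" unfolding c_def using cSup_upper[OF c0S bS] .
        have cA: "0 \<le> c" "c \<le> A" "\<phi> c \<le> x" using cS' by (auto simp: S_def)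
        have pcx: "\<phi> c = x" using mono[of c0 c] cc0 c0 cA by auto
        have EE: "E = {c<..A}"
        proof (rule set_eqI, rule iffI)
          fix t assume "t \<in> E"
          then have t: "0 \<le> t" "t \<le> A" "x < \<phi> t" by (auto simp: E_def)
          have "c < t" using mono[of t c] t cA by (cases "t \<le> c") auto
          then show "t \<in> {c<..A}" using t by auto
        next
          fix t assume t: "t \<in> {c<..A}"
          have "t \<notin> S" using cSup_upper[OF _ bS, of t] t unfolding c_def[symmetric] by auto
          then show "t \<in> E" using t cA by (auto simp: S_def E_def)
        qed
        have "(\<rho> has_integral (\<phi> A - \<phi> c)) {c<..A}"
          using intab[of c A] cA
          by (subst has_integral_spike_set_eq[where T="{c..A}"]) (auto intro: negligible_subset[of "{c}"])
        then have "(\<integral>\<^sup>+ t. ennreal (indicator E t * \<rho> t) \<partial>lborel) = ennreal (\<phi> A - x)"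
          unfolding EE using nn_ind[of "{c<..A}" \<rho>] nn rb pcx by auto
        moreover have "{x<..} \<inter> {0..\<phi> A} = {x<..\<phi> A}" using \<open>\<not> x < 0\<close> by auto
        ultimately show ?thesis using False2 by simp
      qed
    qed
    finally show ?thesis .
  qed
  show ?thesis
  proof (rule measure_eqI_lessThan)
    show "sets (distr ?M borel ?p) = sets borel" by simp
    show "sets (density lborel (indicator {0..\<phi> A})) = sets borel" by simp
    fix x
    have "emeasure (distr ?M borel ?p) {x<..} = emeasure ?M (?p -` {x<..})"
      by (subst emeasure_distr) auto
    also have "\<dots> = ennreal (measure lborel ({x<..} \<inter> {0..\<phi> A}))" by (rule key)
    finally have e1: "emeasure (distr ?M borel ?p) {x<..} = ennreal (measure lborel ({x<..} \<inter> {0..\<phi> A}))" .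
    then show "emeasure (distr ?M borel ?p) {x<..} < \<infinity>" by simp
    have "emeasure (density lborel (indicator {0..\<phi> A})) {x<..} = emeasure lborel ({x<..} \<inter> {0..\<phi> A})"
    proof -
      have "emeasure (density lborel (indicator {0..\<phi> A})) {x<..} = (\<integral>\<^sup>+ t. indicator {0..\<phi> A} t * indicator {x<..} t \<partial>lborel)"
        by (subst emeasure_density) auto
      also have "\<dots> = (\<integral>\<^sup>+ t. indicator ({x<..} \<inter> {0..\<phi> A}) t \<partial>lborel)"
        by (intro nn_integral_cong) (simp add: indicator_inter_arith ac_simps)
      also have "\<dots> = emeasure lborel ({x<..} \<inter> {0..\<phi> A})"
        by (rule nn_integral_indicator) auto
      finally show ?thesis .
    qed
    also have "\<dots> = ennreal (measure lborel ({x<..} \<inter> {0..\<phi> A}))"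
    proof (rule emeasure_eq_ennreal_measure)
      have "emeasure lborel ({x<..} \<inter> {0..\<phi> A}) \<le> emeasure lborel {0..\<phi> A}"
        by (rule emeasure_mono) auto
      then show "emeasure lborel ({x<..} \<inter> {0..\<phi> A}) \<noteq> top"
        by (auto simp: top_unique emeasure_lborel_Icc_eq)
    qed
    finally show "emeasure (distr ?M borel ?p) {x<..} = emeasure (density lborel (indicator {0..\<phi> A})) {x<..}"
      using e1 by simp
  qed
qed

lemma abs_int_iff_borel:
  fixes f :: "real \<Rightarrow> 'b::euclidean_space"
  assumes "(\<lambda>x. indicator S x *\<^sub>R f x) \<in> borel_measurable borel"
  shows "f absolutely_integrable_on S \<longleftrightarrow> set_integrable lborel S f"
  unfolding set_integrable_def
  by (rule integrable_completion) (use assms in simp)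

lemma cv_integral:
  fixes \<rho> :: "real \<Rightarrow> real" and h :: "real \<Rightarrow> 'b::euclidean_space"
  assumes rb: "\<rho> \<in> borel_measurable borel" and nn: "\<And>t. 0 \<le> \<rho> t"
    and ri: "\<rho> integrable_on {0..A}" and A: "0 \<le> A"
    and hb: "h \<in> borel_measurable borel"
  defines "\<phi> \<equiv> \<lambda>t. integral {0..t} \<rho>"
  shows "h absolutely_integrable_on {0..\<phi> A} \<longleftrightarrow> (\<lambda>t. \<rho> t *\<^sub>R h (\<phi> t)) absolutely_integrable_on {0..A}"
    and "h absolutely_integrable_on {0..\<phi> A} \<Longrightarrow> integral {0..\<phi> A} h = integral {0..A} (\<lambda>t. \<rho> t *\<^sub>R h (\<phi> t))"
proof -
  let ?p = "\<lambda>t. \<phi> (clamp A t)"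
  let ?rA = "\<lambda>t. indicator {0..A} t * \<rho> t"
  let ?D = "density lborel (\<lambda>t. ennreal (?rA t))"
  have eq: "distr ?D borel ?p = density lborel (indicator {0..\<phi> A})"
    unfolding \<phi>_def by (rule cv_measure[OF rb nn ri A])
  have pc0: "continuous_on {0..A} \<phi>" unfolding \<phi>_def by (rule phi_cont[OF ri])
  have pc: "continuous_on UNIV ?p"
    by (rule continuous_on_compose2[OF pc0 continuous_clamp]) (use clamp_in A in auto)
  then have pm[measurable]: "?p \<in> borel_measurable borel" by (rule borel_measurable_continuous_onI)
  have hb'[measurable]: "h \<in> borel_measurable borel" by (rule hb)
  have rb'[measurable]: "\<rho> \<in> borel_measurable borel" by (rule rb)
  have N: "density lborel (indicator {0..\<phi> A}) = density lborel (\<lambda>x. ennreal (indicator {0..\<phi> A} x))"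
    by (simp add: ennreal_indicator)
  have fun_eq: "(\<lambda>t. ?rA t *\<^sub>R h (?p t)) = (\<lambda>t. indicator {0..A} t *\<^sub>R (\<rho> t *\<^sub>R h (\<phi> t)))"
    by (rule ext) (auto simp: indicator_def clamp_id)
  have m1: "(\<lambda>t. indicator {0..A} t *\<^sub>R (\<rho> t *\<^sub>R h (\<phi> t))) \<in> borel_measurable borel"
    unfolding fun_eq[symmetric] by measurable
  have m2: "(\<lambda>t. indicator {0..\<phi> A} t *\<^sub>R h t) \<in> borel_measurable borel" by measurable
  have pmD: "?p \<in> measurable ?D borel" by simp
  have i1: "integrable (density lborel (indicator {0..\<phi> A})) h \<longleftrightarrow> set_integrable lborel {0..\<phi> A} h"
    unfolding N set_integrable_def by (subst integrable_density) auto
  have i2: "integrable (distr ?D borel ?p) h \<longleftrightarrow> set_integrable lborel {0..A} (\<lambda>t. \<rho> t *\<^sub>R h (\<phi> t))"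
    unfolding set_integrable_def fun_eq[symmetric]
    by (subst integrable_distr_eq[OF pmD hb], subst integrable_density) (auto simp: nn)
  show iff: "h absolutely_integrable_on {0..\<phi> A} \<longleftrightarrow> (\<lambda>t. \<rho> t *\<^sub>R h (\<phi> t)) absolutely_integrable_on {0..A}"
    using i1 i2 eq abs_int_iff_borel[OF m1] abs_int_iff_borel[OF m2] by simp
  assume ai: "h absolutely_integrable_on {0..\<phi> A}"
  have s1: "set_integrable lborel {0..\<phi> A} h" using ai abs_int_iff_borel[OF m2] by simp
  have s2: "set_integrable lborel {0..A} (\<lambda>t. \<rho> t *\<^sub>R h (\<phi> t))" using ai iff abs_int_iff_borel[OF m1] by simp
  have "integral {0..\<phi> A} h = (LINT x:{0..\<phi> A}|lborel. h x)"
    using set_borel_integral_eq_integral(2)[OF s1] by simp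
  also have "\<dots> = integral\<^sup>L (density lborel (indicator {0..\<phi> A})) h"
    unfolding N set_lebesgue_integral_def by (subst integral_density) auto
  also have "\<dots> = integral\<^sup>L (distr ?D borel ?p) h" using eq by simp
  also have "\<dots> = integral\<^sup>L lborel (\<lambda>t. ?rA t *\<^sub>R h (?p t))"
    by (subst integral_distr[OF pmD hb], subst integral_density) (auto simp: nn)
  also have "\<dots> = (LINT t:{0..A}|lborel. \<rho> t *\<^sub>R h (\<phi> t))"
    unfolding set_lebesgue_integral_def fun_eq ..
  also have "\<dots> = integral {0..A} (\<lambda>t. \<rho> t *\<^sub>R h (\<phi> t))"
    using set_borel_integral_eq_integral(2)[OF s2] .
  finally show "integral {0..\<phi> A} h = integral {0..A} (\<lambda>t. \<rho> t *\<^sub>R h (\<phi> t))" .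
qed

lemma pair_absint:
  fixes a :: "real \<Rightarrow> 'c::euclidean_space" and b :: "real \<Rightarrow> 'd::euclidean_space"
  shows "(\<lambda>t. (a t, b t)) absolutely_integrable_on S \<longleftrightarrow> a absolutely_integrable_on S \<and> b absolutely_integrable_on S"
proof
  assume H: "(\<lambda>t. (a t, b t)) absolutely_integrable_on S"
  have "(fst \<circ> (\<lambda>t. (a t, b t))) absolutely_integrable_on S"
    by (rule absolutely_integrable_linear[OF H bounded_linear_fst])
  moreover have "(snd \<circ> (\<lambda>t. (a t, b t))) absolutely_integrable_on S"
    by (rule absolutely_integrable_linear[OF H bounded_linear_snd])
  ultimately show "a absolutely_integrable_on S \<and> b absolutely_integrable_on S" by (simp add: o_def)
next
  assume H: "a absolutely_integrable_on S \<and> b absolutely_integrable_on S"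
  have l1: "bounded_linear (\<lambda>x::'c. (x, 0::'d))" by (intro bounded_linear_Pair bounded_linear_ident bounded_linear_zero)
  have l2: "bounded_linear (\<lambda>x::'d. (0::'c, x))" by (intro bounded_linear_Pair bounded_linear_ident bounded_linear_zero)
  have "((\<lambda>x. (x, 0::'d)) \<circ> a) absolutely_integrable_on S"
    by (rule absolutely_integrable_linear[OF _ l1]) (use H in auto)
  moreover have "((\<lambda>x. (0::'c, x)) \<circ> b) absolutely_integrable_on S"
    by (rule absolutely_integrable_linear[OF _ l2]) (use H in auto)
  ultimately have "(\<lambda>t. ((\<lambda>x. (x, 0::'d)) \<circ> a) t + ((\<lambda>x. (0::'c, x)) \<circ> b) t) absolutely_integrable_on S"
    by (rule set_integral_add(1))
  then show "(\<lambda>t. (a t, b t)) absolutely_integrable_on S" by (simp add: o_def)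
qed

lemma pair_integral:
  fixes a :: "real \<Rightarrow> 'c::euclidean_space" and b :: "real \<Rightarrow> 'd::euclidean_space"
  assumes "a integrable_on S" "b integrable_on S"
  shows "integral S (\<lambda>t. (a t, b t)) = (integral S a, integral S b)"
proof -
  have l1: "bounded_linear (\<lambda>x::'c. (x, 0::'d))" by (intro bounded_linear_Pair bounded_linear_ident bounded_linear_zero)
  have l2: "bounded_linear (\<lambda>x::'d. (0::'c, x))" by (intro bounded_linear_Pair bounded_linear_ident bounded_linear_zero)
  have "(((\<lambda>x. (x, 0::'d)) \<circ> a) has_integral (integral S a, 0)) S"
    using has_integral_linear[OF integrable_integral[OF assms(1)] l1] by simp
  moreover have "(((\<lambda>x. (0::'c, x)) \<circ> b) has_integral (0, integral S b)) S"
    using has_integral_linear[OF integrable_integral[OF assms(2)] l2] by simp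
  ultimately have "((\<lambda>t. ((\<lambda>x. (x, 0::'d)) \<circ> a) t + ((\<lambda>x. (0::'c, x)) \<circ> b) t) has_integral (integral S a, 0) + (0, integral S b)) S"
    by (rule has_integral_add)
  then show ?thesis by (simp add: o_def integral_unique)
qed

lemma borel_version:
  fixes u :: "real \<Rightarrow> 'a::euclidean_space"
  assumes um: "u \<in> borel_measurable (lebesgue_on S)" and S: "S \<in> sets lebesgue"
  shows "\<exists>u' N. u' \<in> borel_measurable borel \<and> N \<in> sets borel \<and> negligible N \<and> (\<forall>t\<in>S - N. u t = u' t)"
proof -
  let ?f = "\<lambda>t. if t \<in> S then u t else 0"
  have fm: "?f \<in> borel_measurable lebesgue" using borel_measurable_if[OF S, of u] um by simp
  have "\<forall>b\<in>Basis. \<exists>g\<in>borel_measurable lborel. AE x in lborel. ?f x \<bullet> b = g x"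
  proof
    fix b :: 'a assume "b \<in> Basis"
    have "(\<lambda>x. ?f x \<bullet> b) \<in> borel_measurable (completion lborel)"
      using fm by (intro borel_measurable_inner) auto
    then show "\<exists>g\<in>borel_measurable lborel. AE x in lborel. ?f x \<bullet> b = g x"
      by (rule completion_ex_borel_measurable_real)
  qed
  then obtain g where g: "\<And>b. b \<in> Basis \<Longrightarrow> g b \<in> borel_measurable lborel"
    and ae: "\<And>b. b \<in> Basis \<Longrightarrow> AE x in lborel. ?f x \<bullet> b = g b x"
    by metis
  define u' where "u' = (\<lambda>t. \<Sum>b\<in>Basis. g b t *\<^sub>R b)"
  have u'm: "u' \<in> borel_measurable borel"
    unfolding u'_def using g by (intro borel_measurable_sum borel_measurable_scaleR) auto
  have "AE x in lborel. \<forall>b\<in>Basis. ?f x \<bullet> b = g b x"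
    by (rule AE_finite_allI[OF finite_Basis]) (rule ae)
  then have "AE x in lborel. ?f x = u' x"
  proof (rule AE_mp, intro AE_I2 impI)
    fix x assume "\<forall>b\<in>Basis. ?f x \<bullet> b = g b x"
    then have "u' x = (\<Sum>b\<in>Basis. (?f x \<bullet> b) *\<^sub>R b)" unfolding u'_def by simp
    then show "?f x = u' x" by (simp add: euclidean_representation)
  qed
  then obtain N where N: "{x \<in> space lborel. \<not> ?f x = u' x} \<subseteq> N" "emeasure lborel N = 0" "N \<in> sets lborel"
    by (rule AE_E)
  have "N \<in> null_sets lebesgue" using N by (auto intro: null_sets_completion simp: null_sets_def)
  then have "negligible N" by (simp add: negligible_iff_null_sets)
  moreover have "\<forall>t\<in>S - N. u t = u' t"
  proof
    fix t assume t: "t \<in> S - N"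
    then have "t \<notin> {x \<in> space lborel. \<not> ?f x = u' x}" using N(1) by blast
    then show "u t = u' t" using t by simp
  qed
  ultimately show ?thesis using u'm N by (intro exI[of _ u'] exI[of _ N]) auto
qed

lemma borel_lebesgue_on:
  fixes h :: "real \<Rightarrow> 'b::euclidean_space"
  assumes "h \<in> borel_measurable borel"
  shows "h \<in> borel_measurable (lebesgue_on S)"
proof -
  have "h \<in> borel_measurable lborel" using assms by simp
  then have "h \<in> borel_measurable lebesgue" by (rule measurable_completion)
  then show ?thesis by (rule measurable_restrict_space1)
qed

lemma vec_nth_borel[measurable]: "(\<lambda>x::real^'m. x $ i) \<in> borel_measurable borel"
  by (intro borel_measurable_continuous_onI linear_continuous_on bounded_linear_vec_nth)

lemma bdd_absint:
  fixes h :: "real \<Rightarrow> 'b::euclidean_space"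
  assumes "h \<in> borel_measurable borel" "\<And>t. t \<in> {a..b} \<Longrightarrow> norm (h t) \<le> C"
  shows "h absolutely_integrable_on {a..b}"
  by (rule measurable_bounded_by_integrable_imp_absolutely_integrable[where g="\<lambda>_. C"])
     (use assms borel_lebesgue_on in \<open>auto intro: integrable_on_const\<close>)

lemma carath_cont:
  assumes "carath_sol F a T z"
  shows "continuous_on {0..T} z"
proof -
  have ai: "(\<lambda>t. F t (z t)) absolutely_integrable_on {0..T}" using assms by (simp add: carath_sol_def)
  then have "(\<lambda>t. F t (z t)) integrable_on {0..T}" using set_lebesgue_integral_eq_integral(1) by blast
  then have "continuous_on {0..T} (\<lambda>x. integral {0..x} (\<lambda>t. F t (z t)))"
    by (rule indefinite_integral_continuous_1)
  then have "continuous_on {0..T} (\<lambda>x. a + integral {0..x} (\<lambda>t. F t (z t)))"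
    by (intro continuous_intros)
  then show ?thesis
    by (rule continuous_on_cong[THEN iffD1, rotated 2]) (use assms in \<open>auto simp: carath_sol_def\<close>)
qed

lemma carath_cong:
  assumes N: "negligible N" and eq: "\<And>t z. t \<in> {0..T} - N \<Longrightarrow> F t z = G t z"
  shows "carath_sol F a T z \<longleftrightarrow> carath_sol G a T z"
proof -
  have "(\<lambda>t. F t (z t)) absolutely_integrable_on {0..T} \<longleftrightarrow> (\<lambda>t. G t (z t)) absolutely_integrable_on {0..T}"
    by (rule absolutely_integrable_spike_eq[OF N]) (use eq in auto)
  moreover have "integral {0..t} (\<lambda>\<tau>. F \<tau> (z \<tau>)) = integral {0..t} (\<lambda>\<tau>. G \<tau> (z \<tau>))" if "t \<in> {0..T}" for t
    by (rule integral_spike[OF N]) (use eq that in auto)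
  ultimately show ?thesis unfolding carath_sol_def by auto
qed

lemma unique_carath_cong:
  assumes N: "negligible N" and eq: "\<And>t z. t \<in> {0..T} - N \<Longrightarrow> F t z = G t z"
  shows "unique_carath_sol F a T z \<longleftrightarrow> unique_carath_sol G a T z"
proof -
  have c: "carath_sol F a T z' = carath_sol G a T z'" for z' by (rule carath_cong[OF N eq])
  show ?thesis unfolding unique_carath_sol_def using c by simp
qed

lemma inv_into_cong:
  assumes "\<And>x. x \<in> A \<Longrightarrow> f x = g x"
  shows "inv_into A f y = inv_into A g y"
  unfolding inv_into_def using assms by metis

lemma smooth_cont: "smooth_field f \<Longrightarrow> continuous_on UNIV f"
  unfolding smooth_field_def using higher_partials.base by blast

lemma negligible_from_indicator:
  assumes E: "E \<subseteq> {a..b}" and ai: "indicat_real E absolutely_integrable_on {a..b}"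
    and z: "integral {a..b} (indicat_real E) = 0"
  shows "negligible E"
proof -
  have "(indicat_real E has_integral 0) {a..b}"
    using z set_lebesgue_integral_eq_integral(1)[OF ai] by (metis integrable_integral)
  then have "((\<lambda>x. if x \<in> {a..b} then indicat_real E x else 0) has_integral 0) UNIV"
    using has_integral_restrict_UNIV[of "{a..b}" "indicat_real E" 0] by blast
  moreover have "(\<lambda>x. if x \<in> {a..b} then indicat_real E x else 0) = indicat_real E"
    using E by (intro ext) (auto simp: indicator_def)
  ultimately have "(indicat_real E has_integral 0) UNIV" by simp
  then have "E \<in> lmeasurable \<and> 0 = measure lebesgue E"
    using lmeasurable_iff_indicator_has_integral by blast
  then show ?thesis by (simp add: negligible_iff_measure)
qed

lemma inv_into_cont:
  fixes \<sigma> :: "real \<Rightarrow> real"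
  assumes "continuous_on {a..b} \<sigma>" "inj_on \<sigma> {a..b}"
  shows "continuous_on (\<sigma> ` {a..b}) (inv_into {a..b} \<sigma>)"
proof -
  have "continuous_on (\<sigma> ` {a..b}) (the_inv_into {a..b} \<sigma>)"
    by (rule continuous_on_inv_into) (use assms in auto)
  moreover have "the_inv_into {a..b} \<sigma> y = inv_into {a..b} \<sigma> y" if "y \<in> \<sigma> ` {a..b}" for y
    using that assms(2) by (auto simp: the_inv_into_f_f)
  ultimately show ?thesis using continuous_on_cong by blast
qed

definition rel :: "real \<Rightarrow> (real \<Rightarrow> 'a::real_normed_vector) \<Rightarrow> (real \<Rightarrow> real) \<Rightarrow> real \<Rightarrow> (real \<Rightarrow> 'a) \<Rightarrow> (real \<Rightarrow> real) \<Rightarrow> bool" where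
  "rel T x N S y Y0 \<longleftrightarrow> 0 < T \<and> continuous_on {0..T} x \<and> continuous_on {0..T} N \<and>
     (\<forall>a b. 0 \<le> a \<longrightarrow> a \<le> b \<longrightarrow> b \<le> T \<longrightarrow> N a \<le> N b) \<and> N 0 = 0 \<and> S = T + N T \<and>
     (\<forall>s\<in>{0..S}. Y0 s \<in> {0..T} \<and> Y0 s + N (Y0 s) = s \<and> y s = x (Y0 s))"

lemma st_dyn_scale:
  "st_dyn f g r (r *\<^sub>R v) (a, z) = r *\<^sub>R (1, ctrl_dyn f g v z)"
  by (simp add: st_dyn_def ctrl_dyn_def scaleR_sum_right scaleR_add_right)

lemma ctrl_dyn_borel[measurable]:
  fixes f :: "real^'n \<Rightarrow> real^'n" and g :: "'m::finite \<Rightarrow> real^'n \<Rightarrow> real^'n"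
  assumes [measurable]: "f \<in> borel_measurable borel" "\<And>i. g i \<in> borel_measurable borel"
    "v \<in> borel_measurable borel" "z \<in> borel_measurable borel"
  shows "(\<lambda>t. ctrl_dyn f g (v t) (z t)) \<in> borel_measurable borel"
  unfolding ctrl_dyn_def by measurable

lemma st_dyn_borel[measurable]:
  fixes f :: "real^'n \<Rightarrow> real^'n" and g :: "'m::finite \<Rightarrow> real^'n \<Rightarrow> real^'n"
  assumes [measurable]: "f \<in> borel_measurable borel" "\<And>i. g i \<in> borel_measurable borel"
    "a \<in> borel_measurable borel" "v \<in> borel_measurable borel" "(\<lambda>t. snd (z t)) \<in> borel_measurable borel"
  shows "(\<lambda>t. st_dyn f g (a t) (v t) (z t)) \<in> borel_measurable borel"
  unfolding st_dyn_def by measurable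

lemma const_absint: "(\<lambda>_. c::real) absolutely_integrable_on {a..b::real}"
  by (rule bdd_absint[where C="\<bar>c\<bar>"]) auto

lemma integral_one: "0 \<le> t \<Longrightarrow> integral {0..t} (\<lambda>_. 1::real) = t"
  by simp

lemma forward:
  fixes f :: "real^'n \<Rightarrow> real^'n" and g :: "'m::finite \<Rightarrow> real^'n \<Rightarrow> real^'n"
    and u :: "real \<Rightarrow> real^'m" and x :: "real \<Rightarrow> real^'n"
  assumes fc: "continuous_on UNIV f" and gc: "\<And>i. continuous_on UNIV (g i)"
    and sp: "strict_process f g x0 T u x"
  defines "S \<equiv> sigma_I u T"
  shows "\<exists>w0 w y0 y. st_process f g x0 S w0 w y0 y \<and> (\<forall>s. 0 < w0 s) \<and>
      y0 S = T \<and> y S = x T \<and> rel T x (nu u) S y y0 \<and>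
      (\<forall>s\<in>{0..S}. nu w s = s - y0 s \<and> y0 s = inv_into {0..T} (sigma_I u) s) \<and>
      (\<forall>s\<in>{0..S}. nu (\<lambda>s. inverse (1 + norm (u (inv_into {0..T} (sigma_I u) s))) *\<^sub>R u (inv_into {0..T} (sigma_I u) s)) s = s - y0 s)"
proof -
  have T: "0 < T" and ua: "u absolutely_integrable_on {0..T}"
    and us: "unique_carath_sol (\<lambda>t z. ctrl_dyn f g (u t) z) x0 T x"
    using sp by (auto simp: strict_process_def)
  have xs: "carath_sol (\<lambda>t z. ctrl_dyn f g (u t) z) x0 T x" using us by (simp add: unique_carath_sol_def)
  have xc: "continuous_on {0..T} x" by (rule carath_cont[OF xs])
  have fb[measurable]: "f \<in> borel_measurable borel" using fc by (rule borel_measurable_continuous_onI)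
  have gb[measurable]: "g i \<in> borel_measurable borel" for i using gc by (rule borel_measurable_continuous_onI)
  have "u \<in> borel_measurable (lebesgue_on {0..T})" using ua absolutely_integrable_measurable[of "{0..T}" u] by auto
  then have "\<exists>u' N. u' \<in> borel_measurable borel \<and> N \<in> sets borel \<and> negligible N \<and> (\<forall>t\<in>{0..T} - N. u t = u' t)"
    by (rule borel_version) simp
  then obtain u' N0 where u'b[measurable]: "u' \<in> borel_measurable borel" and N0b: "N0 \<in> sets borel"
    and N0n: "negligible N0" and uu': "\<And>t. t \<in> {0..T} - N0 \<Longrightarrow> u t = u' t"
    by blast
  have u'a: "u' absolutely_integrable_on {0..T}"
    by (rule absolutely_integrable_spike[OF ua N0n]) (use uu' in auto)
  define \<rho> where "\<rho> t = 1 + norm (u' t)" for t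
  have \<rho>b[measurable]: "\<rho> \<in> borel_measurable borel" unfolding \<rho>_def by measurable
  have \<rho>pos: "0 < \<rho> t" for t unfolding \<rho>_def by (simp add: add_pos_nonneg)
  have \<rho>nn: "0 \<le> \<rho> t" for t using \<rho>pos[of t] by simp
  have nu'a: "(\<lambda>t. norm (u' t)) integrable_on {0..T}" using u'a by (simp add: absolutely_integrable_on_def)
  have \<rho>i: "\<rho> integrable_on {0..T}" unfolding \<rho>_def by (intro integrable_add integrable_on_const nu'a) auto
  have \<rho>i': "\<rho> integrable_on {0..t}" if "t \<le> T" for t
    using integrable_on_subinterval[OF \<rho>i, of 0 t] that by auto
  define \<sigma> where "\<sigma> t = integral {0..t} \<rho>" for t
  have \<sigma>N: "\<sigma> t = t + nu u t" if "t \<in> {0..T}" for t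
  proof -
    have nn: "(\<lambda>t. norm (u' t)) integrable_on {0..t}" using integrable_on_subinterval[OF nu'a, of 0 t] that by auto
    have "nu u t = integral {0..t} (\<lambda>\<tau>. norm (u' \<tau>))"
      unfolding nu_def by (rule integral_spike[OF N0n]) (use uu' that in auto)
    moreover have "\<sigma> t = integral {0..t} (\<lambda>_. 1::real) + integral {0..t} (\<lambda>\<tau>. norm (u' \<tau>))"
      unfolding \<sigma>_def \<rho>_def by (rule integral_add) (auto intro: nn)
    ultimately show ?thesis using that by simp
  qed
  have \<sigma>sig: "\<sigma> t = sigma_I u t" if "t \<in> {0..T}" for t
    unfolding \<sigma>_def sigma_I_def \<rho>_def by (rule integral_spike[OF N0n]) (use uu' that in auto)
  have \<sigma>S: "\<sigma> T = S" unfolding S_def using \<sigma>sig[of T] T by auto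
  have \<sigma>mono: "b - a \<le> \<sigma> b - \<sigma> a" if "0 \<le> a" "a \<le> b" "b \<le> T" for a b
  proof -
    have "\<sigma> b - \<sigma> a = integral {a..b} \<rho>" unfolding \<sigma>_def by (rule phi_mono(1)[OF \<rho>nn \<rho>i that])
    moreover have "integral {a..b} (\<lambda>_. 1::real) \<le> integral {a..b} \<rho>"
      by (rule integral_le) (use integrable_on_subinterval[OF \<rho>i, of a b] that in \<open>auto simp: \<rho>_def\<close>)
    ultimately show ?thesis using that by simp
  qed
  have \<sigma>0: "\<sigma> 0 = 0" unfolding \<sigma>_def by simp
  have \<sigma>c: "continuous_on {0..T} \<sigma>" unfolding \<sigma>_def by (rule phi_cont[OF \<rho>i])
  have \<sigma>inj: "inj_on \<sigma> {0..T}"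
  proof (rule inj_onI)
    fix a b assume ab: "a \<in> {0..T}" "b \<in> {0..T}" "\<sigma> a = \<sigma> b"
    show "a = b"
    proof (cases "a \<le> b")
      case True then show ?thesis using \<sigma>mono[of a b] ab by auto
    next
      case False then show ?thesis using \<sigma>mono[of b a] ab by auto
    qed
  qed
  have TS: "T \<le> S" using \<sigma>mono[of 0 T] T \<sigma>0 \<sigma>S by auto
  have \<sigma>img: "\<sigma> ` {0..T} = {0..S}"
  proof
    show "\<sigma> ` {0..T} \<subseteq> {0..S}"
    proof
      fix s assume "s \<in> \<sigma> ` {0..T}"
      then obtain t where t: "t \<in> {0..T}" "s = \<sigma> t" by auto
      then show "s \<in> {0..S}" using \<sigma>mono[of 0 t] \<sigma>mono[of t T] \<sigma>0 \<sigma>S by auto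
    qed
    show "{0..S} \<subseteq> \<sigma> ` {0..T}"
    proof
      fix s assume s: "s \<in> {0..S}"
      obtain t where "0 \<le> t" "t \<le> T" "\<sigma> t = s"
        using IVT'[of \<sigma> 0 s T] \<sigma>c \<sigma>0 \<sigma>S s T by auto
      then show "s \<in> \<sigma> ` {0..T}" by force
    qed
  qed
  define Y0 where "Y0 s = inv_into {0..T} \<sigma> (clamp S s)" for s
  have Y0in: "Y0 s \<in> {0..T}" for s
    unfolding Y0_def by (rule inv_into_into) (use clamp_in[of S s] TS T \<sigma>img in auto)
  have \<sigma>Y0: "\<sigma> (Y0 s) = s" if "s \<in> {0..S}" for s
    unfolding Y0_def clamp_id[OF that] by (rule f_inv_into_f) (use that \<sigma>img in auto)
  have Y0\<sigma>: "Y0 (\<sigma> t) = t" if "t \<in> {0..T}" for t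
  proof -
    have "\<sigma> t \<in> {0..S}" using that \<sigma>img by auto
    then show ?thesis unfolding Y0_def clamp_id[OF \<open>\<sigma> t \<in> {0..S}\<close>] using inv_into_f_f[OF \<sigma>inj that] by simp
  qed
  have Y0c: "continuous_on UNIV Y0"
  proof -
    have "continuous_on {0..S} (inv_into {0..T} \<sigma>)" using inv_into_cont[OF \<sigma>c \<sigma>inj] \<sigma>img by simp
    then show ?thesis unfolding Y0_def
      by (rule continuous_on_compose2[OF _ continuous_clamp]) (use clamp_in TS T in auto)
  qed
  have Y0b[measurable]: "Y0 \<in> borel_measurable borel" using Y0c by (rule borel_measurable_continuous_onI)
  define xh where "xh t = x (clamp T t)" for t
  have xhc: "continuous_on UNIV xh" unfolding xh_def
    by (rule continuous_on_compose2[OF xc continuous_clamp]) (use clamp_in T in auto)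
  have xhb[measurable]: "xh \<in> borel_measurable borel" using xhc by (rule borel_measurable_continuous_onI)
  have xhx: "xh t = x t" if "t \<in> {0..T}" for t unfolding xh_def clamp_id[OF that] ..
  define w0 where "w0 s = inverse (1 + norm (u' (Y0 s)))" for s
  define w where "w s = w0 s *\<^sub>R u' (Y0 s)" for s
  define y where "y s = x (Y0 s)" for s
  have yxh: "y s = xh (Y0 s)" for s unfolding y_def using xhx[OF Y0in] by simp
  have w0b[measurable]: "w0 \<in> borel_measurable borel" unfolding w0_def by measurable
  have wb[measurable]: "w \<in> borel_measurable borel" unfolding w_def by measurable
  have yb[measurable]: "y \<in> borel_measurable borel" unfolding yxh by measurable
  have w0pos: "0 < w0 s" for s unfolding w0_def by (simp add: add_pos_nonneg)
  have w0\<sigma>: "w0 (\<sigma> t) = inverse (\<rho> t)" if "t \<in> {0..T}" for t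
    unfolding w0_def \<rho>_def Y0\<sigma>[OF that] ..
  have w\<sigma>: "w (\<sigma> t) = inverse (\<rho> t) *\<^sub>R u' t" if "t \<in> {0..T}" for t
    unfolding w_def w0\<sigma>[OF that] Y0\<sigma>[OF that] ..
  have normw: "norm (w s) = 1 - w0 s" for s
  proof -
    have p: "0 < 1 + norm (u' (Y0 s))" by (simp add: add_pos_nonneg)
    have "norm (w s) = norm (u' (Y0 s)) / (1 + norm (u' (Y0 s)))"
      unfolding w_def w0_def using p by (simp add: field_simps)
    also have "\<dots> = 1 - w0 s" unfolding w0_def using p by (simp add: field_simps)
    finally show ?thesis .
  qed
  have KY: "w0 absolutely_integrable_on {0..s} \<and> integral {0..s} w0 = Y0 s" if s: "s \<in> {0..S}" for s
  proof -
    define t where "t = Y0 s"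
    have t: "t \<in> {0..T}" unfolding t_def by (rule Y0in)
    have st: "\<sigma> t = s" unfolding t_def using \<sigma>Y0[OF s] .
    have e: "\<rho> \<tau> *\<^sub>R w0 (\<sigma> \<tau>) = 1" if "\<tau> \<in> {0..t}" for \<tau>
      using that t w0\<sigma>[of \<tau>] \<rho>pos[of \<tau>] by auto
    have ai: "(\<lambda>\<tau>. \<rho> \<tau> *\<^sub>R w0 (\<sigma> \<tau>)) absolutely_integrable_on {0..t}"
      using absolutely_integrable_spike[OF const_absint[where c=1 and a=0 and b=t] negligible_empty, of "\<lambda>\<tau>. \<rho> \<tau> *\<^sub>R w0 (\<sigma> \<tau>)"] e by auto
    have cv1: "w0 absolutely_integrable_on {0..\<sigma> t} \<longleftrightarrow> (\<lambda>\<tau>. \<rho> \<tau> *\<^sub>R w0 (\<sigma> \<tau>)) absolutely_integrable_on {0..t}"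
      unfolding \<sigma>_def by (rule cv_integral(1)[OF \<rho>b \<rho>nn \<rho>i'[of t] _ w0b]) (use t in auto)
    have w0a: "w0 absolutely_integrable_on {0..s}" using cv1 ai st by simp
    have "integral {0..\<sigma> t} w0 = integral {0..t} (\<lambda>\<tau>. \<rho> \<tau> *\<^sub>R w0 (\<sigma> \<tau>))"
      unfolding \<sigma>_def by (rule cv_integral(2)[OF \<rho>b \<rho>nn \<rho>i'[of t] _ w0b]) (use t w0a st[symmetric] \<sigma>_def in auto)
    also have "\<dots> = integral {0..t} (\<lambda>_. 1::real)" by (rule integral_cong) (use e in auto)
    also have "\<dots> = t" using t by simp
    finally show ?thesis using w0a st t_def by simp
  qed
  have nuw: "nu w s = s - Y0 s" if "s \<in> {0..S}" for s
  proof -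
    have w0i: "w0 integrable_on {0..s}" using KY[OF that] set_lebesgue_integral_eq_integral(1) by blast
    have "nu w s = integral {0..s} (\<lambda>s. 1 - w0 s)" unfolding nu_def normw ..
    also have "\<dots> = integral {0..s} (\<lambda>_. 1::real) - integral {0..s} w0"
      by (rule integral_diff) (auto intro: w0i)
    also have "\<dots> = s - Y0 s" using KY[OF that] that by simp
    finally show ?thesis .
  qed
  define k' where "k' \<tau> = ctrl_dyn f g (u' \<tau>) (xh \<tau>)" for \<tau>
  have k'b[measurable]: "k' \<in> borel_measurable borel" unfolding k'_def by measurable
  have xsa: "(\<lambda>t. ctrl_dyn f g (u t) (x t)) absolutely_integrable_on {0..T}"
    and xse: "\<And>t. t \<in> {0..T} \<Longrightarrow> x t = x0 + integral {0..t} (\<lambda>\<tau>. ctrl_dyn f g (u \<tau>) (x \<tau>))"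
    using xs by (auto simp: carath_sol_def)
  have k'eq: "ctrl_dyn f g (u t) (x t) = k' t" if "t \<in> {0..T} - N0" for t
    using that uu'[OF that] xhx[of t] by (simp add: k'_def)
  have k'a: "k' absolutely_integrable_on {0..T}"
    by (rule absolutely_integrable_spike[OF xsa N0n]) (use k'eq in auto)
  have k'int: "integral {0..t} k' = x t - x0" if "t \<in> {0..T}" for t
  proof -
    have "integral {0..t} k' = integral {0..t} (\<lambda>\<tau>. ctrl_dyn f g (u \<tau>) (x \<tau>))"
      by (rule integral_spike[OF N0n]) (use k'eq that in auto)
    then show ?thesis using xse[OF that] by simp
  qed
  have pairsub: "(\<lambda>\<tau>. (1::real, k \<tau>)) absolutely_integrable_on {0..t} \<and>
                 integral {0..t} (\<lambda>\<tau>. (1::real, k \<tau>)) = (t, integral {0..t} k)"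
    if "t \<in> {0..T}" "k absolutely_integrable_on {0..T}" for t and k :: "real \<Rightarrow> real^'n"
  proof -
    have ka: "k absolutely_integrable_on {0..t}"
      by (rule absolutely_integrable_on_subinterval[OF that(2)]) (use that in auto)
    have pa: "(\<lambda>\<tau>. (1::real, k \<tau>)) absolutely_integrable_on {0..t}"
      using pair_absint[where a="\<lambda>_. 1::real" and b=k] const_absint ka by blast
    have "integral {0..t} (\<lambda>\<tau>. (1::real, k \<tau>)) = (integral {0..t} (\<lambda>_. 1::real), integral {0..t} k)"
      by (rule pair_integral) (use ka set_lebesgue_integral_eq_integral(1) in auto)
    then show ?thesis using pa that by simp
  qed
  have stcv: "h absolutely_integrable_on {0..\<sigma> t} \<and> integral {0..\<sigma> t} h = (t, integral {0..t} k)"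
    if t: "t \<in> {0..T}" and hb: "h \<in> borel_measurable borel" and ka: "k absolutely_integrable_on {0..T}"
       and hk: "\<And>\<tau>. \<tau> \<in> {0..T} \<Longrightarrow> \<rho> \<tau> *\<^sub>R h (\<sigma> \<tau>) = (1, k \<tau>)"
    for t h and k :: "real \<Rightarrow> real^'n"
  proof -
    have ps: "(\<lambda>\<tau>. (1::real, k \<tau>)) absolutely_integrable_on {0..t} \<and>
                 integral {0..t} (\<lambda>\<tau>. (1::real, k \<tau>)) = (t, integral {0..t} k)"
      by (rule pairsub[OF t ka])
    have a1: "(\<lambda>\<tau>. \<rho> \<tau> *\<^sub>R h (\<sigma> \<tau>)) absolutely_integrable_on {0..t}"
      by (rule absolutely_integrable_spike[OF conjunct1[OF ps] negligible_empty]) (use hk t in auto)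
    have cv1: "h absolutely_integrable_on {0..\<sigma> t} \<longleftrightarrow> (\<lambda>\<tau>. \<rho> \<tau> *\<^sub>R h (\<sigma> \<tau>)) absolutely_integrable_on {0..t}"
      unfolding \<sigma>_def by (rule cv_integral(1)[OF \<rho>b \<rho>nn \<rho>i'[of t] _ hb]) (use t in auto)
    have ha: "h absolutely_integrable_on {0..\<sigma> t}" using cv1 a1 by simp
    have "integral {0..\<sigma> t} h = integral {0..t} (\<lambda>\<tau>. \<rho> \<tau> *\<^sub>R h (\<sigma> \<tau>))"
      using cv_integral(2)[OF \<rho>b \<rho>nn \<rho>i'[of t] _ hb] ha t unfolding \<sigma>_def by auto
    also have "\<dots> = integral {0..t} (\<lambda>\<tau>. (1::real, k \<tau>))" by (rule integral_cong) (use hk t in auto)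
    finally show ?thesis using ps ha by simp
  qed
  define H where "H s = st_dyn f g (w0 s) (w s) (Y0 s, y s)" for s
  have Hb[measurable]: "H \<in> borel_measurable borel" unfolding H_def by measurable
  have H\<sigma>: "\<rho> \<tau> *\<^sub>R H (\<sigma> \<tau>) = (1, k' \<tau>)" if "\<tau> \<in> {0..T}" for \<tau>
  proof -
    have "H (\<sigma> \<tau>) = st_dyn f g (inverse (\<rho> \<tau>)) (inverse (\<rho> \<tau>) *\<^sub>R u' \<tau>) (\<tau>, xh \<tau>)"
      unfolding H_def w0\<sigma>[OF that] w\<sigma>[OF that] Y0\<sigma>[OF that] yxh ..
    then show ?thesis using \<rho>pos[of \<tau>] by (simp add: st_dyn_scale k'_def)
  qed
  have Hf: "H absolutely_integrable_on {0..s} \<and> integral {0..s} H = (Y0 s, y s - x0)" if s: "s \<in> {0..S}" for s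
  proof -
    have t: "Y0 s \<in> {0..T}" by (rule Y0in)
    have "H absolutely_integrable_on {0..\<sigma> (Y0 s)} \<and> integral {0..\<sigma> (Y0 s)} H = (Y0 s, integral {0..Y0 s} k')"
      by (rule stcv[OF t Hb k'a H\<sigma>])
    then show ?thesis using \<sigma>Y0[OF s] k'int[OF t] by (simp add: y_def)
  qed
  have carath: "carath_sol (\<lambda>s yy. st_dyn f g (w0 s) (w s) yy) (0, x0) S (\<lambda>s. (Y0 s, y s))"
    unfolding carath_sol_def
  proof
    show "(\<lambda>s. st_dyn f g (w0 s) (w s) (Y0 s, y s)) absolutely_integrable_on {0..S}"
      using Hf[of S] TS T unfolding H_def by auto
    show "\<forall>s\<in>{0..S}. (Y0 s, y s) = (0, x0) + integral {0..s} (\<lambda>\<tau>. st_dyn f g (w0 \<tau>) (w \<tau>) (Y0 \<tau>, y \<tau>))"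
      using Hf unfolding H_def by auto
  qed
  have uniq: "\<forall>s\<in>{0..S}. Z s = (Y0 s, y s)"
    if cz: "carath_sol (\<lambda>s yy. st_dyn f g (w0 s) (w s) yy) (0, x0) S Z" for Z
  proof -
    have Zc: "continuous_on {0..S} Z" by (rule carath_cont[OF cz])
    have Za: "(\<lambda>s. st_dyn f g (w0 s) (w s) (Z s)) absolutely_integrable_on {0..S}"
      and Ze: "\<And>s. s \<in> {0..S} \<Longrightarrow> Z s = (0, x0) + integral {0..s} (\<lambda>\<tau>. st_dyn f g (w0 \<tau>) (w \<tau>) (Z \<tau>))"
      using cz by (auto simp: carath_sol_def)
    define Zh where "Zh s = Z (clamp S s)" for s
    have Zhc: "continuous_on UNIV Zh" unfolding Zh_def
      by (rule continuous_on_compose2[OF Zc continuous_clamp]) (use clamp_in TS T in auto)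
    have Zhb[measurable]: "(\<lambda>s. snd (Zh s)) \<in> borel_measurable borel"
      by (intro borel_measurable_continuous_onI continuous_on_snd Zhc)
    have ZhZ: "Zh s = Z s" if "s \<in> {0..S}" for s unfolding Zh_def clamp_id[OF that] ..
    define H2 where "H2 s = st_dyn f g (w0 s) (w s) (Zh s)" for s
    have H2b[measurable]: "H2 \<in> borel_measurable borel" unfolding H2_def by measurable
    have H2eq: "H2 s = st_dyn f g (w0 s) (w s) (Z s)" if "s \<in> {0..S}" for s
      unfolding H2_def ZhZ[OF that] ..
    define x' where "x' \<tau> = snd (Zh (\<sigma> \<tau>))" for \<tau>
    define k2 where "k2 \<tau> = ctrl_dyn f g (u' \<tau>) (x' \<tau>)" for \<tau>
    have H2\<sigma>: "\<rho> \<tau> *\<^sub>R H2 (\<sigma> \<tau>) = (1, k2 \<tau>)" if "\<tau> \<in> {0..T}" for \<tau>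
    proof -
      have zz: "Zh (\<sigma> \<tau>) = (fst (Zh (\<sigma> \<tau>)), x' \<tau>)" unfolding x'_def by simp
      have "H2 (\<sigma> \<tau>) = st_dyn f g (inverse (\<rho> \<tau>)) (inverse (\<rho> \<tau>) *\<^sub>R u' \<tau>) (fst (Zh (\<sigma> \<tau>)), x' \<tau>)"
        unfolding H2_def w0\<sigma>[OF that] w\<sigma>[OF that] by (subst zz) simp
      then show ?thesis using \<rho>pos[of \<tau>] by (simp add: st_dyn_scale k2_def)
    qed
    have H2a: "H2 absolutely_integrable_on {0..S}"
      by (rule absolutely_integrable_spike[OF Za negligible_empty]) (use H2eq in auto)
    have cvT: "H2 absolutely_integrable_on {0..\<sigma> T} \<longleftrightarrow> (\<lambda>\<tau>. \<rho> \<tau> *\<^sub>R H2 (\<sigma> \<tau>)) absolutely_integrable_on {0..T}"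
      unfolding \<sigma>_def by (rule cv_integral(1)[OF \<rho>b \<rho>nn \<rho>i'[of T] _ H2b]) (use T in auto)
    have "(\<lambda>\<tau>. \<rho> \<tau> *\<^sub>R H2 (\<sigma> \<tau>)) absolutely_integrable_on {0..T}" using cvT H2a \<sigma>S by simp
    then have "(\<lambda>\<tau>. (1::real, k2 \<tau>)) absolutely_integrable_on {0..T}"
      by (rule absolutely_integrable_spike[OF _ negligible_empty]) (use H2\<sigma> in auto)
    then have k2a: "k2 absolutely_integrable_on {0..T}" using pair_absint[where a="\<lambda>_. 1::real" and b=k2] by blast
    have x'e: "x' t = x0 + integral {0..t} k2" if t: "t \<in> {0..T}" for t
    proof -
      have st: "\<sigma> t \<in> {0..S}" using t \<sigma>img by auto
      have i2: "integral {0..\<sigma> t} H2 = (t, integral {0..t} k2)"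
        using stcv[OF t H2b k2a H2\<sigma>] by simp
      have "Z (\<sigma> t) = (0, x0) + integral {0..\<sigma> t} (\<lambda>\<tau>. st_dyn f g (w0 \<tau>) (w \<tau>) (Z \<tau>))" by (rule Ze[OF st])
      also have "integral {0..\<sigma> t} (\<lambda>\<tau>. st_dyn f g (w0 \<tau>) (w \<tau>) (Z \<tau>)) = integral {0..\<sigma> t} H2"
        by (rule integral_cong) (use H2eq st in auto)
      finally show ?thesis using i2 ZhZ[OF st] by (simp add: x'_def)
    qed
    have k2eq: "ctrl_dyn f g (u t) (x' t) = k2 t" if "t \<in> {0..T} - N0" for t
      using uu'[OF that] by (simp add: k2_def)
    have cx': "carath_sol (\<lambda>t z. ctrl_dyn f g (u t) z) x0 T x'"
      unfolding carath_sol_def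
    proof
      show "(\<lambda>t. ctrl_dyn f g (u t) (x' t)) absolutely_integrable_on {0..T}"
        by (rule absolutely_integrable_spike[OF k2a N0n]) (use k2eq in auto)
      show "\<forall>t\<in>{0..T}. x' t = x0 + integral {0..t} (\<lambda>\<tau>. ctrl_dyn f g (u \<tau>) (x' \<tau>))"
      proof
        fix t assume t: "t \<in> {0..T}"
        have "integral {0..t} (\<lambda>\<tau>. ctrl_dyn f g (u \<tau>) (x' \<tau>)) = integral {0..t} k2"
          by (rule integral_spike[OF N0n]) (use k2eq t in auto)
        then show "x' t = x0 + integral {0..t} (\<lambda>\<tau>. ctrl_dyn f g (u \<tau>) (x' \<tau>))" using x'e[OF t] by simp
      qed
    qed
    have x'x: "x' t = x t" if "t \<in> {0..T}" for t using us cx' that by (auto simp: unique_carath_sol_def)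
    show ?thesis
    proof
      fix s assume s: "s \<in> {0..S}"
      have H2s: "H2 integrable_on {0..s}"
        using absolutely_integrable_on_subinterval[OF H2a, of 0 s] s set_lebesgue_integral_eq_integral(1) by auto
      have "Z s = (0, x0) + integral {0..s} H2"
        using Ze[OF s] integral_cong[of "{0..s}" "\<lambda>\<tau>. st_dyn f g (w0 \<tau>) (w \<tau>) (Z \<tau>)" H2] H2eq s by auto
      then have "fst (Z s) = fst (integral {0..s} H2)" by simp
      also have "\<dots> = integral {0..s} (\<lambda>\<tau>. fst (H2 \<tau>))"
        by (rule integral_linear[OF H2s bounded_linear_fst, symmetric, unfolded o_def])
      also have "\<dots> = integral {0..s} w0" by (simp add: H2_def st_dyn_def)
      also have "\<dots> = Y0 s" using KY[OF s] by simp
      finally have f1: "fst (Z s) = Y0 s" .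
      have "snd (Z s) = snd (Z (\<sigma> (Y0 s)))" using \<sigma>Y0[OF s] by simp
      also have "\<dots> = x' (Y0 s)" unfolding x'_def using ZhZ \<sigma>Y0[OF s] s by simp
      also have "\<dots> = y s" using x'x[OF Y0in] by (simp add: y_def)
      finally show "Z s = (Y0 s, y s)" using f1 by (simp add: prod_eq_iff)
    qed
  qed
  have stp: "st_process f g x0 S w0 w Y0 y"
    unfolding st_process_def unique_carath_sol_def
  proof (intro conjI)
    show "0 < S" using TS T by simp
    show "w0 \<in> borel_measurable (lebesgue_on {0..S})" by (rule borel_lebesgue_on) simp
    show "w \<in> borel_measurable (lebesgue_on {0..S})" by (rule borel_lebesgue_on) simp
    show "AE s in lebesgue_on {0..S}. 0 \<le> w0 s \<and> w0 s + norm (w s) = 1"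
      by (rule AE_I2) (use w0pos normw less_imp_le in auto)
    show "carath_sol (\<lambda>s. st_dyn f g (w0 s) (w s)) (0, x0) S (\<lambda>s. (Y0 s, y s))" using carath by simp
    show "\<forall>z'. carath_sol (\<lambda>s. st_dyn f g (w0 s) (w s)) (0, x0) S z' \<longrightarrow> (\<forall>t\<in>{0..S}. z' t = (Y0 t, y t))"
      using uniq by auto
  qed
  have Y0S: "Y0 S = T" using Y0\<sigma>[of T] \<sigma>S T by auto
  have nuu: "nu u t = \<sigma> t - t" if "t \<in> {0..T}" for t using \<sigma>N[OF that] by simp
  have relt: "rel T x (nu u) S y Y0"
    unfolding rel_def
  proof (intro conjI ballI allI impI)
    show "0 < T" by (rule T)
    show "continuous_on {0..T} x" by (rule xc)
    have "continuous_on {0..T} (\<lambda>t. \<sigma> t - t)" by (intro continuous_intros \<sigma>c)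
    then show "continuous_on {0..T} (nu u)" using continuous_on_cong nuu by (metis (no_types, lifting))
    fix a b :: real assume "0 \<le> a" "a \<le> b" "b \<le> T"
    then show "nu u a \<le> nu u b" using \<sigma>mono[of a b] nuu[of a] nuu[of b] by auto
  next
    show "nu u 0 = 0" by (simp add: nu_def)
    show "S = T + nu u T" using nuu[of T] \<sigma>S T by auto
  next
    fix s assume s: "s \<in> {0..S}"
    show "Y0 s \<in> {0..T}" by (rule Y0in)
    show "Y0 s + nu u (Y0 s) = s" using nuu[OF Y0in[of s]] \<sigma>Y0[OF s] by simp
    show "y s = x (Y0 s)" by (simp add: y_def)
  qed
  have Y0inv: "Y0 s = inv_into {0..T} (sigma_I u) s" if "s \<in> {0..S}" for s
    unfolding Y0_def clamp_id[OF that] by (rule inv_into_cong) (use \<sigma>sig in auto)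
  define E where "E = {s \<in> {0..S}. Y0 s \<in> N0}"
  have Eb[measurable]: "E \<in> sets borel"
  proof -
    have "Y0 -` N0 \<in> sets borel" using measurable_sets_borel[OF Y0b N0b] by simp
    moreover have "E = {0..S} \<inter> Y0 -` N0" by (auto simp: E_def)
    ultimately show ?thesis by auto
  qed
  have En: "negligible E"
  proof -
    have ib[measurable]: "indicat_real E \<in> borel_measurable borel" by measurable
    have e0: "\<rho> \<tau> *\<^sub>R indicat_real E (\<sigma> \<tau>) = 0" if "\<tau> \<in> {0..T} - N0" for \<tau>
    proof -
      have "\<sigma> \<tau> \<notin> E" using that Y0\<sigma>[of \<tau>] by (auto simp: E_def)
      then show ?thesis by simp
    qed
    have a0: "(\<lambda>\<tau>. \<rho> \<tau> *\<^sub>R indicat_real E (\<sigma> \<tau>)) absolutely_integrable_on {0..T}"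
      by (rule absolutely_integrable_spike[OF const_absint[where c=0 and a=0 and b=T] N0n]) (use e0 in auto)
    have cvT: "indicat_real E absolutely_integrable_on {0..\<sigma> T} \<longleftrightarrow> (\<lambda>\<tau>. \<rho> \<tau> *\<^sub>R indicat_real E (\<sigma> \<tau>)) absolutely_integrable_on {0..T}"
      unfolding \<sigma>_def by (rule cv_integral(1)[OF \<rho>b \<rho>nn \<rho>i'[of T] _ ib]) (use T in auto)
    have ia: "indicat_real E absolutely_integrable_on {0..S}" using cvT a0 \<sigma>S by simp
    have "integral {0..\<sigma> T} (indicat_real E) = integral {0..T} (\<lambda>\<tau>. \<rho> \<tau> *\<^sub>R indicat_real E (\<sigma> \<tau>))"
      using cv_integral(2)[OF \<rho>b \<rho>nn \<rho>i'[of T] _ ib] ia \<sigma>S T unfolding \<sigma>_def by auto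
    also have "\<dots> = integral {0..T} (\<lambda>_. 0::real)"
      by (rule integral_spike[OF N0n]) (use e0 in auto)
    finally have "integral {0..S} (indicat_real E) = 0" using \<sigma>S by simp
    moreover have "E \<subseteq> {0..S}" by (auto simp: E_def)
    ultimately show ?thesis using negligible_from_indicator[OF _ ia] by blast
  qed
  have barnu: "nu (\<lambda>s. inverse (1 + norm (u (inv_into {0..T} (sigma_I u) s))) *\<^sub>R u (inv_into {0..T} (sigma_I u) s)) s = s - Y0 s"
    if s: "s \<in> {0..S}" for s
  proof -
    have "nu (\<lambda>s. inverse (1 + norm (u (inv_into {0..T} (sigma_I u) s))) *\<^sub>R u (inv_into {0..T} (sigma_I u) s)) s
        = nu w s"
      unfolding nu_def
    proof (rule integral_spike[OF En])
      fix \<tau> assume \<tau>: "\<tau> \<in> {0..s} - E"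
      then have \<tau>S: "\<tau> \<in> {0..S}" using s by auto
      have "Y0 \<tau> \<notin> N0" using \<tau> \<tau>S by (auto simp: E_def)
      then have "u (Y0 \<tau>) = u' (Y0 \<tau>)" using uu' Y0in by auto
      then show "norm (w \<tau>) = norm (inverse (1 + norm (u (inv_into {0..T} (sigma_I u) \<tau>))) *\<^sub>R u (inv_into {0..T} (sigma_I u) \<tau>))"
        using Y0inv[OF \<tau>S] by (simp add: w_def w0_def)
    qed
    then show ?thesis using nuw[OF s] by simp
  qed
  show ?thesis
    by (rule exI[of _ w0], rule exI[of _ w], rule exI[of _ Y0], rule exI[of _ y])
       (use stp w0pos Y0S relt nuw Y0inv barnu in \<open>auto simp: y_def\<close>)
qed

lemma AE_lebesgue_on_negl:
  assumes ae: "AE x in lebesgue_on S. P x" and S: "S \<in> sets lebesgue"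
  shows "\<exists>N. negligible N \<and> (\<forall>x\<in>S - N. P x)"
proof -
  obtain N where N: "\<And>x. x \<in> space (lebesgue_on S) - N \<Longrightarrow> P x" "N \<in> null_sets (lebesgue_on S)"
    using ae by (elim AE_E3) blast
  have "N \<in> null_sets lebesgue" using N(2) null_sets_restrict_space[OF S] by blast
  then have "negligible N" by (simp add: negligible_iff_null_sets)
  then show ?thesis using N(1) by auto
qed

lemma pos_integral:
  fixes h :: "real \<Rightarrow> real"
  assumes hb[measurable]: "h \<in> borel_measurable borel" and pos: "\<And>t. 0 < h t"
    and hi: "h integrable_on {a..b}" and ab: "a < b"
  shows "0 < integral {a..b} h"
proof -
  have ha: "h absolutely_integrable_on {a..b}"
    using hi pos by (intro nonnegative_absolutely_integrable_1) (auto intro: less_imp_le)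
  have mb: "(\<lambda>x. indicator {a..b} x *\<^sub>R h x) \<in> borel_measurable borel" by measurable
  have si: "set_integrable lborel {a..b} h" using ha abs_int_iff_borel[OF mb] by simp
  have eq: "integral {a..b} h = integral\<^sup>L lborel (\<lambda>x. indicator {a..b} x * h x)"
    using set_borel_integral_eq_integral(2)[OF si] by (simp add: set_lebesgue_integral_def)
  have int: "integrable lborel (\<lambda>x. indicator {a..b} x * h x)" using si by (simp add: set_integrable_def)
  have nn: "AE x in lborel. 0 \<le> indicator {a..b} x * h x"
    by (rule AE_I2) (use pos[THEN less_imp_le] in \<open>simp add: indicator_def\<close>)
  have ge: "0 \<le> integral {a..b} h" using eq nn by (simp add: integral_nonneg_AE)
  show ?thesis
  proof (rule ccontr)
    assume "\<not> 0 < integral {a..b} h"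
    then have "integral\<^sup>L lborel (\<lambda>x. indicator {a..b} x * h x) = 0" using ge eq by simp
    then have "AE x in lborel. indicator {a..b} x * h x = 0"
      using integral_nonneg_eq_0_iff_AE[OF int nn] by simp
    then have "AE x in lborel. x \<notin> {a..b}"
      by (rule AE_mp) (use pos in \<open>auto intro!: AE_I2 simp: indicator_def less_imp_neq[symmetric]\<close>)
    then have "emeasure lborel {a..b} = 0"
      by (subst (asm) AE_iff_measurable[of "{a..b}"]) auto
    then show False using ab by simp
  qed
qed

lemma backward:
  fixes f :: "real^'n \<Rightarrow> real^'n" and g :: "'m::finite \<Rightarrow> real^'n \<Rightarrow> real^'n"
    and w0 :: "real \<Rightarrow> real" and w :: "real \<Rightarrow> real^'m" and y0 :: "real \<Rightarrow> real" and y :: "real \<Rightarrow> real^'n"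
  assumes fc: "continuous_on UNIV f" and gc: "\<And>i. continuous_on UNIV (g i)"
    and stp: "st_process f g x0 S w0 w y0 y" and pos: "AE s in lebesgue_on {0..S}. 0 < w0 s"
  shows "\<exists>u x. strict_process f g x0 (y0 S) u x \<and> x (y0 S) = y S \<and> rel (y0 S) x (nu u) S y y0 \<and>
           (\<forall>s\<in>{0..S}. nu w s = s - y0 s)"
proof -
  have S: "0 < S" and w0m: "w0 \<in> borel_measurable (lebesgue_on {0..S})"
    and wm: "w \<in> borel_measurable (lebesgue_on {0..S})"
    and ae1: "AE s in lebesgue_on {0..S}. 0 \<le> w0 s \<and> w0 s + norm (w s) = 1"
    and us: "unique_carath_sol (\<lambda>s yy. st_dyn f g (w0 s) (w s) yy) (0, x0) S (\<lambda>s. (y0 s, y s))"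
    using stp by (auto simp: st_process_def)
  have fb[measurable]: "f \<in> borel_measurable borel" using fc by (rule borel_measurable_continuous_onI)
  have gb[measurable]: "g i \<in> borel_measurable borel" for i using gc by (rule borel_measurable_continuous_onI)
  have "AE s in lebesgue_on {0..S}. 0 < w0 s \<and> w0 s + norm (w s) = 1" using ae1 pos by eventually_elim auto
  then have "\<exists>N. negligible N \<and> (\<forall>s\<in>{0..S} - N. 0 < w0 s \<and> w0 s + norm (w s) = 1)"
    by (rule AE_lebesgue_on_negl) simp
  then obtain N1 where N1: "negligible N1" "\<And>s. s \<in> {0..S} - N1 \<Longrightarrow> 0 < w0 s \<and> w0 s + norm (w s) = 1"
    by blast
  have "\<exists>u' N. u' \<in> borel_measurable borel \<and> N \<in> sets borel \<and> negligible N \<and> (\<forall>t\<in>{0..S} - N. w0 t = u' t)"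
    by (rule borel_version[OF w0m]) simp
  then obtain w0' N2 where w0'b[measurable]: "w0' \<in> borel_measurable borel" and N2: "negligible N2"
    and w0'e: "\<And>t. t \<in> {0..S} - N2 \<Longrightarrow> w0 t = w0' t" by blast
  have "\<exists>u' N. u' \<in> borel_measurable borel \<and> N \<in> sets borel \<and> negligible N \<and> (\<forall>t\<in>{0..S} - N. w t = u' t)"
    by (rule borel_version[OF wm]) simp
  then obtain w' N3 where w'b[measurable]: "w' \<in> borel_measurable borel" and N3: "negligible N3"
    and w'e: "\<And>t. t \<in> {0..S} - N3 \<Longrightarrow> w t = w' t" by blast
  define N where "N = N1 \<union> N2 \<union> N3"
  have Nn: "negligible N" unfolding N_def using N1(1) N2 N3 by auto
  define good where "good s \<longleftrightarrow> 0 < w0' s \<and> w0' s + norm (w' s) = 1" for s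
  define v0 where "v0 s = (if good s then w0' s else 1)" for s
  define v where "v s = (if good s then w' s else 0)" for s
  have goodb[measurable]: "Measurable.pred borel good" unfolding good_def by measurable
  have v0b[measurable]: "v0 \<in> borel_measurable borel" unfolding v0_def by measurable
  have vb[measurable]: "v \<in> borel_measurable borel" unfolding v_def by measurable
  have v0pos: "0 < v0 s" for s by (simp add: v0_def good_def)
  have v0nn: "0 \<le> v0 s" for s using v0pos[of s] by simp
  have vnorm: "v0 s + norm (v s) = 1" for s by (simp add: v0_def v_def good_def)
  have v0le: "v0 s \<le> 1" for s using vnorm[of s] norm_ge_zero[of "v s"] by linarith
  have vv: "w0 s = v0 s \<and> w s = v s" if "s \<in> {0..S} - N" for s
  proof -
    have "0 < w0 s \<and> w0 s + norm (w s) = 1" using N1(2)[of s] that by (auto simp: N_def)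
    moreover have "w0 s = w0' s" "w s = w' s" using w0'e[of s] w'e[of s] that by (auto simp: N_def)
    ultimately show ?thesis by (simp add: v0_def v_def good_def)
  qed
  have us': "unique_carath_sol (\<lambda>s yy. st_dyn f g (v0 s) (v s) yy) (0, x0) S (\<lambda>s. (y0 s, y s))"
    using unique_carath_cong[OF Nn, of S "\<lambda>s yy. st_dyn f g (w0 s) (w s) yy" "\<lambda>s yy. st_dyn f g (v0 s) (v s) yy"] vv us
    by auto
  have cs: "carath_sol (\<lambda>s yy. st_dyn f g (v0 s) (v s) yy) (0, x0) S (\<lambda>s. (y0 s, y s))"
    using us' by (simp add: unique_carath_sol_def)
  define Hs where "Hs s = st_dyn f g (v0 s) (v s) (y0 s, y s)" for s
  have Hsa: "Hs absolutely_integrable_on {0..S}"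
    and Hse: "\<And>s. s \<in> {0..S} \<Longrightarrow> (y0 s, y s) = (0, x0) + integral {0..s} Hs"
    using cs by (auto simp: carath_sol_def Hs_def[abs_def])
  have Yc: "continuous_on {0..S} (\<lambda>s. (y0 s, y s))" by (rule carath_cont[OF cs])
  have y0c: "continuous_on {0..S} y0" using continuous_on_fst[OF Yc] by simp
  have yc: "continuous_on {0..S} y" using continuous_on_snd[OF Yc] by simp
  have v0a: "v0 absolutely_integrable_on {0..S}" by (rule bdd_absint[where C=1]) (use v0le v0nn in auto)
  have v0i: "v0 integrable_on {0..S}" using v0a set_lebesgue_integral_eq_integral(1) by blast
  have v0i': "v0 integrable_on {0..t}" if "t \<le> S" for t
    using integrable_on_subinterval[OF v0i, of 0 t] that by auto
  define \<phi> where "\<phi> s = integral {0..s} v0" for s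
  have Hsi: "Hs integrable_on {0..s}" if "s \<in> {0..S}" for s
    using absolutely_integrable_on_subinterval[OF Hsa, of 0 s] that set_lebesgue_integral_eq_integral(1) by auto
  have y0\<phi>: "y0 s = \<phi> s" if s: "s \<in> {0..S}" for s
  proof -
    have "y0 s = fst (integral {0..s} Hs)" using Hse[OF s] by (metis fst_add fst_conv add_0)
    also have "\<dots> = integral {0..s} (\<lambda>\<tau>. fst (Hs \<tau>))"
      by (rule integral_linear[OF Hsi[OF s] bounded_linear_fst, symmetric, unfolded o_def])
    also have "\<dots> = \<phi> s" by (simp add: Hs_def st_dyn_def \<phi>_def)
    finally show ?thesis .
  qed
  define T where "T = \<phi> S"
  have \<phi>c: "continuous_on {0..S} \<phi>" unfolding \<phi>_def by (rule phi_cont[OF v0i])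
  have \<phi>0: "\<phi> 0 = 0" by (simp add: \<phi>_def)
  have \<phi>diff: "\<phi> b - \<phi> a = integral {a..b} v0" if "0 \<le> a" "a \<le> b" "b \<le> S" for a b
    unfolding \<phi>_def by (rule phi_mono(1)[OF v0nn v0i that])
  have \<phi>strict: "\<phi> a < \<phi> b" if "0 \<le> a" "a < b" "b \<le> S" for a b
  proof -
    have "0 < integral {a..b} v0"
      by (rule pos_integral[OF v0b v0pos _ that(2)]) (use integrable_on_subinterval[OF v0i, of a b] that in auto)
    then show ?thesis using \<phi>diff[of a b] that by auto
  qed
  have \<phi>lip: "\<phi> b - \<phi> a \<le> b - a" if "0 \<le> a" "a \<le> b" "b \<le> S" for a b
  proof -
    have "integral {a..b} v0 \<le> integral {a..b} (\<lambda>_. 1::real)"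
      by (rule integral_le) (use integrable_on_subinterval[OF v0i, of a b] that v0le in auto)
    then show ?thesis using \<phi>diff[OF that] that by simp
  qed
  have \<phi>inj: "inj_on \<phi> {0..S}"
  proof (rule inj_onI)
    fix a b assume ab: "a \<in> {0..S}" "b \<in> {0..S}" "\<phi> a = \<phi> b"
    show "a = b"
    proof (rule ccontr)
      assume "a \<noteq> b"
      then consider "a < b" | "b < a" by linarith
      then show False using \<phi>strict[of a b] \<phi>strict[of b a] ab by cases auto
    qed
  qed
  have T: "0 < T" unfolding T_def using \<phi>strict[of 0 S] S \<phi>0 by auto
  have \<phi>img: "\<phi> ` {0..S} = {0..T}"
  proof
    show "\<phi> ` {0..S} \<subseteq> {0..T}"
    proof
      fix t assume "t \<in> \<phi> ` {0..S}"
      then obtain s where s: "s \<in> {0..S}" "t = \<phi> s" by auto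
      then show "t \<in> {0..T}" using \<phi>strict[of 0 s] \<phi>strict[of s S] \<phi>0 unfolding T_def
        by (cases "s = 0"; cases "s = S") auto
    qed
    show "{0..T} \<subseteq> \<phi> ` {0..S}"
    proof
      fix t assume t: "t \<in> {0..T}"
      obtain s where "0 \<le> s" "s \<le> S" "\<phi> s = t"
        using IVT'[of \<phi> 0 t S] \<phi>c \<phi>0 t S unfolding T_def by auto
      then show "t \<in> \<phi> ` {0..S}" by force
    qed
  qed
  define \<tau> where "\<tau> t = inv_into {0..S} \<phi> (clamp T t)" for t
  have \<tau>in: "\<tau> t \<in> {0..S}" for t
    unfolding \<tau>_def by (rule inv_into_into) (use clamp_in[of T t] T \<phi>img in auto)
  have \<phi>\<tau>: "\<phi> (\<tau> t) = t" if "t \<in> {0..T}" for t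
    unfolding \<tau>_def clamp_id[OF that] by (rule f_inv_into_f) (use that \<phi>img in auto)
  have \<tau>\<phi>: "\<tau> (\<phi> s) = s" if "s \<in> {0..S}" for s
  proof -
    have "\<phi> s \<in> {0..T}" using that \<phi>img by auto
    then show ?thesis unfolding \<tau>_def clamp_id[OF \<open>\<phi> s \<in> {0..T}\<close>] using inv_into_f_f[OF \<phi>inj that] by simp
  qed
  have \<tau>c: "continuous_on UNIV \<tau>"
  proof -
    have "continuous_on {0..T} (inv_into {0..S} \<phi>)" using inv_into_cont[OF \<phi>c \<phi>inj] \<phi>img by simp
    then show ?thesis unfolding \<tau>_def
      by (rule continuous_on_compose2[OF _ continuous_clamp]) (use clamp_in T in auto)
  qed
  have \<tau>b[measurable]: "\<tau> \<in> borel_measurable borel" using \<tau>c by (rule borel_measurable_continuous_onI)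
  have \<tau>T: "\<tau> T = S" using \<tau>\<phi>[of S] S unfolding T_def by auto
  have \<tau>mono: "\<tau> a \<le> \<tau> b" if "0 \<le> a" "a \<le> b" "b \<le> T" for a b
  proof (rule ccontr)
    assume "\<not> \<tau> a \<le> \<tau> b"
    then have "\<phi> (\<tau> b) < \<phi> (\<tau> a)" using \<phi>strict[of "\<tau> b" "\<tau> a"] \<tau>in[of a] \<tau>in[of b] by auto
    then show False using \<phi>\<tau>[of a] \<phi>\<tau>[of b] that by auto
  qed
  define yh where "yh s = y (clamp S s)" for s
  have yhc: "continuous_on UNIV yh" unfolding yh_def
    by (rule continuous_on_compose2[OF yc continuous_clamp]) (use clamp_in S in auto)
  have yhb[measurable]: "yh \<in> borel_measurable borel" using yhc by (rule borel_measurable_continuous_onI)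
  define x where "x t = yh (\<tau> t)" for t
  have xy: "x t = y (\<tau> t)" for t unfolding x_def yh_def clamp_id[OF \<tau>in] ..
  have xb[measurable]: "x \<in> borel_measurable borel" unfolding x_def by measurable
  have xc: "continuous_on {0..T} x"
  proof -
    have "continuous_on UNIV (yh \<circ> \<tau>)" by (rule continuous_on_compose[OF \<tau>c]) (use yhc continuous_on_subset in blast)
    then show ?thesis unfolding x_def o_def by (rule continuous_on_subset) auto
  qed
  define u where "u t = inverse (v0 (\<tau> t)) *\<^sub>R v (\<tau> t)" for t
  have ub[measurable]: "u \<in> borel_measurable borel" unfolding u_def by measurable
  have u\<phi>: "v0 s *\<^sub>R u (\<phi> s) = v s" if "s \<in> {0..S}" for s
    unfolding u_def \<tau>\<phi>[OF that] using v0pos[of s] by simp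
  have \<phi>T: "\<phi> s \<in> {0..T}" if "s \<in> {0..S}" for s using that \<phi>img by auto
  have vnorm': "norm (v s) = 1 - v0 s" for s using vnorm[of s] by simp
  have va: "v absolutely_integrable_on {0..S}" by (rule bdd_absint[where C=1]) (use vnorm' v0nn in auto)
  have omv: "(\<lambda>s. 1 - v0 s) absolutely_integrable_on {0..s}" for s
    by (rule bdd_absint[where C=1]) (use v0nn v0le in auto)
  have int1mv: "integral {0..s} (\<lambda>s. 1 - v0 s) = s - \<phi> s" if "s \<in> {0..S}" for s
  proof -
    have "integral {0..s} (\<lambda>s. 1 - v0 s) = integral {0..s} (\<lambda>_. 1::real) - integral {0..s} v0"
      by (rule integral_diff) (use v0i' that in auto)
    then show ?thesis using that by (simp add: \<phi>_def)
  qed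
  define k where "k t = ctrl_dyn f g (u t) (x t)" for t
  have kb[measurable]: "k \<in> borel_measurable borel" unfolding k_def by measurable
  have Hsk: "Hs s = (v0 s, v0 s *\<^sub>R k (\<phi> s))" if s: "s \<in> {0..S}" for s
  proof -
    have "Hs s = st_dyn f g (v0 s) (v0 s *\<^sub>R u (\<phi> s)) (y0 s, x (\<phi> s))"
      unfolding Hs_def u\<phi>[OF s] xy \<tau>\<phi>[OF s] ..
    then show ?thesis by (simp add: st_dyn_scale k_def)
  qed
  have snda: "(\<lambda>s. v0 s *\<^sub>R k (\<phi> s)) absolutely_integrable_on {0..S}"
  proof -
    have "(snd \<circ> Hs) absolutely_integrable_on {0..S}" by (rule absolutely_integrable_linear[OF Hsa bounded_linear_snd])
    then show ?thesis by (rule absolutely_integrable_spike[OF _ negligible_empty]) (use Hsk in auto)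
  qed
  have ka: "k absolutely_integrable_on {0..T}"
    using cv_integral(1)[OF v0b v0nn v0i S[THEN less_imp_le] kb] snda unfolding T_def \<phi>_def by simp
  have kint: "integral {0..t} k = x t - x0" if t: "t \<in> {0..T}" for t
  proof -
    define s where "s = \<tau> t"
    have s: "s \<in> {0..S}" unfolding s_def by (rule \<tau>in)
    have ps: "\<phi> s = t" unfolding s_def by (rule \<phi>\<tau>[OF t])
    have kas: "k absolutely_integrable_on {0..\<phi> s}"
      by (rule absolutely_integrable_on_subinterval[OF ka]) (use ps t in auto)
    have "integral {0..\<phi> s} k = integral {0..s} (\<lambda>\<sigma>. v0 \<sigma> *\<^sub>R k (\<phi> \<sigma>))"
      using cv_integral(2)[OF v0b v0nn v0i'[of s] _ kb] kas s unfolding \<phi>_def by auto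
    also have "\<dots> = integral {0..s} (\<lambda>\<sigma>. snd (Hs \<sigma>))" by (rule integral_cong) (use Hsk s in auto)
    also have "\<dots> = snd (integral {0..s} Hs)"
      by (rule integral_linear[OF Hsi[OF s] bounded_linear_snd, unfolded o_def])
    also have "\<dots> = y s - x0" using Hse[OF s] by (metis add_diff_cancel_left' snd_conv snd_diff)
    finally show ?thesis using ps xy s_def by simp
  qed
  have ua: "u absolutely_integrable_on {0..T}"
  proof -
    have "(\<lambda>s. v0 s *\<^sub>R u (\<phi> s)) absolutely_integrable_on {0..S}"
      by (rule absolutely_integrable_spike[OF va negligible_empty]) (use u\<phi> in auto)
    then show ?thesis using cv_integral(1)[OF v0b v0nn v0i S[THEN less_imp_le] ub] unfolding T_def \<phi>_def by simp
  qed
  have cx: "carath_sol (\<lambda>t z. ctrl_dyn f g (u t) z) x0 T x"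
    unfolding carath_sol_def using ka kint by (auto simp: k_def[abs_def])
  have uniq: "\<forall>t\<in>{0..T}. x' t = x t" if cx': "carath_sol (\<lambda>t z. ctrl_dyn f g (u t) z) x0 T x'" for x'
  proof -
    have x'c: "continuous_on {0..T} x'" by (rule carath_cont[OF cx'])
    have x'a: "(\<lambda>t. ctrl_dyn f g (u t) (x' t)) absolutely_integrable_on {0..T}"
      and x'e: "\<And>t. t \<in> {0..T} \<Longrightarrow> x' t = x0 + integral {0..t} (\<lambda>\<tau>. ctrl_dyn f g (u \<tau>) (x' \<tau>))"
      using cx' by (auto simp: carath_sol_def)
    define xh' where "xh' t = x' (clamp T t)" for t
    have xh'c: "continuous_on UNIV xh'" unfolding xh'_def
      by (rule continuous_on_compose2[OF x'c continuous_clamp]) (use clamp_in T in auto)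
    have xh'b[measurable]: "xh' \<in> borel_measurable borel" using xh'c by (rule borel_measurable_continuous_onI)
    have xh'x: "xh' t = x' t" if "t \<in> {0..T}" for t unfolding xh'_def clamp_id[OF that] ..
    define k' where "k' t = ctrl_dyn f g (u t) (xh' t)" for t
    have k'b[measurable]: "k' \<in> borel_measurable borel" unfolding k'_def by measurable
    have k'a: "k' absolutely_integrable_on {0..T}"
      by (rule absolutely_integrable_spike[OF x'a negligible_empty]) (use xh'x in \<open>auto simp: k'_def\<close>)
    have k'e: "x' t = x0 + integral {0..t} k'" if t: "t \<in> {0..T}" for t
    proof -
      have "integral {0..t} k' = integral {0..t} (\<lambda>\<tau>. ctrl_dyn f g (u \<tau>) (x' \<tau>))"
        by (rule integral_cong) (use xh'x t in \<open>auto simp: k'_def\<close>)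
      then show ?thesis using x'e[OF t] by simp
    qed
    define Z where "Z s = (y0 s, xh' (\<phi> s))" for s
    have Zi: "st_dyn f g (v0 s) (v s) (Z s) = (v0 s, v0 s *\<^sub>R k' (\<phi> s))" if s: "s \<in> {0..S}" for s
    proof -
      have "st_dyn f g (v0 s) (v s) (Z s) = st_dyn f g (v0 s) (v0 s *\<^sub>R u (\<phi> s)) (y0 s, xh' (\<phi> s))"
        unfolding Z_def u\<phi>[OF s] ..
      then show ?thesis by (simp add: st_dyn_scale k'_def)
    qed
    have k'\<phi>a: "(\<lambda>s. v0 s *\<^sub>R k' (\<phi> s)) absolutely_integrable_on {0..S}"
      using cv_integral(1)[OF v0b v0nn v0i S[THEN less_imp_le] k'b] k'a unfolding T_def \<phi>_def by simp
    have cz: "carath_sol (\<lambda>s yy. st_dyn f g (v0 s) (v s) yy) (0, x0) S Z"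
      unfolding carath_sol_def
    proof
      have "(\<lambda>s. (v0 s, v0 s *\<^sub>R k' (\<phi> s))) absolutely_integrable_on {0..S}"
        using pair_absint[where a=v0 and b="\<lambda>s. v0 s *\<^sub>R k' (\<phi> s)"] v0a k'\<phi>a by blast
      then show "(\<lambda>s. st_dyn f g (v0 s) (v s) (Z s)) absolutely_integrable_on {0..S}"
        by (rule absolutely_integrable_spike[OF _ negligible_empty]) (use Zi in auto)
      show "\<forall>s\<in>{0..S}. Z s = (0, x0) + integral {0..s} (\<lambda>\<tau>. st_dyn f g (v0 \<tau>) (v \<tau>) (Z \<tau>))"
      proof
        fix s assume s: "s \<in> {0..S}"
        have ks: "(\<lambda>s. v0 s *\<^sub>R k' (\<phi> s)) absolutely_integrable_on {0..s}"
          by (rule absolutely_integrable_on_subinterval[OF k'\<phi>a]) (use s in auto)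
        have k'as: "k' absolutely_integrable_on {0..\<phi> s}"
          by (rule absolutely_integrable_on_subinterval[OF k'a]) (use \<phi>T[OF s] in auto)
        have "integral {0..s} (\<lambda>\<tau>. st_dyn f g (v0 \<tau>) (v \<tau>) (Z \<tau>)) = integral {0..s} (\<lambda>\<tau>. (v0 \<tau>, v0 \<tau> *\<^sub>R k' (\<phi> \<tau>)))"
          by (rule integral_cong) (use Zi s in auto)
        also have "\<dots> = (integral {0..s} v0, integral {0..s} (\<lambda>\<tau>. v0 \<tau> *\<^sub>R k' (\<phi> \<tau>)))"
          by (rule pair_integral) (use v0i' s ks set_lebesgue_integral_eq_integral(1) in auto)
        also have "integral {0..s} (\<lambda>\<tau>. v0 \<tau> *\<^sub>R k' (\<phi> \<tau>)) = integral {0..\<phi> s} k'"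
          using cv_integral(2)[OF v0b v0nn v0i'[of s] _ k'b] k'as s unfolding \<phi>_def by auto
        finally show "Z s = (0, x0) + integral {0..s} (\<lambda>\<tau>. st_dyn f g (v0 \<tau>) (v \<tau>) (Z \<tau>))"
          using k'e[OF \<phi>T[OF s]] xh'x[OF \<phi>T[OF s]] y0\<phi>[OF s] by (simp add: Z_def \<phi>_def)
      qed
    qed
    have ZY: "Z s = (y0 s, y s)" if "s \<in> {0..S}" for s using us' cz that by (auto simp: unique_carath_sol_def)
    show ?thesis
    proof
      fix t assume t: "t \<in> {0..T}"
      have "x' t = xh' (\<phi> (\<tau> t))" using xh'x[OF t] \<phi>\<tau>[OF t] by simp
      also have "\<dots> = y (\<tau> t)" using ZY[OF \<tau>in[of t]] by (simp add: Z_def)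
      finally show "x' t = x t" by (simp add: xy)
    qed
  qed
  have sp: "strict_process f g x0 T u x"
    unfolding strict_process_def unique_carath_sol_def using T ua cx uniq by blast
  have Ty0: "y0 S = T" unfolding T_def using y0\<phi>[of S] S by auto
  have xT: "x T = y S" using xy[of T] \<tau>T by simp
  have nuu: "nu u t = \<tau> t - t" if t: "t \<in> {0..T}" for t
  proof -
    define s where "s = \<tau> t"
    have s: "s \<in> {0..S}" unfolding s_def by (rule \<tau>in)
    have ps: "\<phi> s = t" unfolding s_def by (rule \<phi>\<tau>[OF t])
    have nb[measurable]: "(\<lambda>t. norm (u t)) \<in> borel_measurable borel" by measurable
    have e: "v0 \<sigma> *\<^sub>R norm (u (\<phi> \<sigma>)) = 1 - v0 \<sigma>" if "\<sigma> \<in> {0..s}" for \<sigma>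
    proof -
      have "\<sigma> \<in> {0..S}" using that s by auto
      then have "norm (v \<sigma>) = v0 \<sigma> * norm (u (\<phi> \<sigma>))" using u\<phi>[of \<sigma>] v0nn[of \<sigma>] by (metis norm_scaleR abs_of_nonneg)
      then show ?thesis using vnorm'[of \<sigma>] by simp
    qed
    have a1: "(\<lambda>\<sigma>. v0 \<sigma> *\<^sub>R norm (u (\<phi> \<sigma>))) absolutely_integrable_on {0..s}"
      by (rule absolutely_integrable_spike[OF omv negligible_empty]) (use e in auto)
    have cv1: "(\<lambda>t. norm (u t)) absolutely_integrable_on {0..\<phi> s}"
      using cv_integral(1)[OF v0b v0nn v0i'[of s] _ nb] a1 s unfolding \<phi>_def by auto
    have "integral {0..\<phi> s} (\<lambda>t. norm (u t)) = integral {0..s} (\<lambda>\<sigma>. v0 \<sigma> *\<^sub>R norm (u (\<phi> \<sigma>)))"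
      using cv_integral(2)[OF v0b v0nn v0i'[of s] _ nb] cv1 s unfolding \<phi>_def by auto
    also have "\<dots> = integral {0..s} (\<lambda>\<sigma>. 1 - v0 \<sigma>)" by (rule integral_cong) (use e in auto)
    also have "\<dots> = s - \<phi> s" by (rule int1mv[OF s])
    finally show ?thesis using ps s_def by (simp add: nu_def)
  qed
  have relt: "rel T x (nu u) S y y0"
    unfolding rel_def
  proof (intro conjI ballI allI impI)
    show "0 < T" by (rule T)
    show "continuous_on {0..T} x" by (rule xc)
    have "continuous_on {0..T} (\<lambda>t. \<tau> t - t)" by (intro continuous_intros continuous_on_subset[OF \<tau>c]) auto
    then show "continuous_on {0..T} (nu u)" using continuous_on_cong nuu by (metis (no_types, lifting))
    fix a b :: real assume ab: "0 \<le> a" "a \<le> b" "b \<le> T"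
    have "\<phi> (\<tau> b) - \<phi> (\<tau> a) \<le> \<tau> b - \<tau> a"
      by (rule \<phi>lip) (use \<tau>in[of a] \<tau>in[of b] \<tau>mono[OF ab] in auto)
    then show "nu u a \<le> nu u b" using nuu[of a] nuu[of b] \<phi>\<tau>[of a] \<phi>\<tau>[of b] ab by auto
  next
    show "nu u 0 = 0" by (simp add: nu_def)
    show "S = T + nu u T" using nuu[of T] \<tau>T T by auto
  next
    fix s assume s: "s \<in> {0..S}"
    show "y0 s \<in> {0..T}" using \<phi>T[OF s] y0\<phi>[OF s] by simp
    show "y0 s + nu u (y0 s) = s" using nuu[OF \<phi>T[OF s]] y0\<phi>[OF s] \<tau>\<phi>[OF s] by simp
    show "y s = x (y0 s)" using xy y0\<phi>[OF s] \<tau>\<phi>[OF s] by simp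
  qed
  have nuw: "nu w s = s - y0 s" if s: "s \<in> {0..S}" for s
  proof -
    have "nu w s = integral {0..s} (\<lambda>\<sigma>. 1 - v0 \<sigma>)"
      unfolding nu_def
    proof (rule integral_spike[OF Nn])
      fix \<sigma> assume "\<sigma> \<in> {0..s} - N"
      then have "\<sigma> \<in> {0..S} - N" using s by auto
      then show "1 - v0 \<sigma> = norm (w \<sigma>)" using vv vnorm' by auto
    qed
    then show ?thesis using int1mv[OF s] y0\<phi>[OF s] by simp
  qed
  show ?thesis using sp Ty0 xT relt nuw by (intro exI[of _ u] exI[of _ x]) auto
qed

definition sh :: "real \<Rightarrow> (real \<Rightarrow> real) \<Rightarrow> real \<Rightarrow> real" where "sh T N t = t + N (clamp T t)"
definition Yh :: "real \<Rightarrow> (real \<Rightarrow> real) \<Rightarrow> real \<Rightarrow> real" where "Yh S Y0 s = Y0 (clamp S s) + (s - clamp S s)"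

lemma cext_clamp: "cext D z t = z (clamp D t)" by (simp add: cext_def clamp_def)

lemma clamp_mono: "a \<le> b \<Longrightarrow> clamp L a \<le> clamp L b" by (auto simp: clamp_def)
lemma clamp_lip: "\<bar>clamp L a - clamp L b\<bar> \<le> \<bar>a - b\<bar>" by (auto simp: clamp_def)

lemma rel_facts:
  assumes r: "rel T x N S y Y0"
  shows "0 < T" "T \<le> S" "Y0 S = T"
    and "\<And>a b. 0 \<le> a \<Longrightarrow> a \<le> b \<Longrightarrow> b - a \<le> sh T N b - sh T N a"
    and "\<And>s. 0 \<le> s \<Longrightarrow> 0 \<le> Yh S Y0 s \<and> sh T N (Yh S Y0 s) = s"
    and "\<And>t. 0 \<le> t \<Longrightarrow> Yh S Y0 (sh T N t) = t"
    and "\<And>s s'. 0 \<le> s \<Longrightarrow> 0 \<le> s' \<Longrightarrow> \<bar>Yh S Y0 s - Yh S Y0 s'\<bar> \<le> \<bar>s - s'\<bar>"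
    and "\<And>t. cext T (\<lambda>t. (x t, N t)) t = (x (clamp T t), sh T N t - t)"
    and "\<And>s. 0 \<le> s \<Longrightarrow> cext S (\<lambda>s. (y s, s - Y0 s)) s = (x (clamp T (Yh S Y0 s)), s - Yh S Y0 s)"
proof -
  have T: "0 < T" and mono: "\<And>a b. 0 \<le> a \<Longrightarrow> a \<le> b \<Longrightarrow> b \<le> T \<Longrightarrow> N a \<le> N b" and N0: "N 0 = 0"
    and ST: "S = T + N T" and R: "\<And>s. s \<in> {0..S} \<Longrightarrow> Y0 s \<in> {0..T} \<and> Y0 s + N (Y0 s) = s \<and> y s = x (Y0 s)"
    using r unfolding rel_def by auto
  show "0 < T" by (rule T)
  have NT: "0 \<le> N T" using mono[of 0 T] N0 T by auto
  show TS: "T \<le> S" using ST NT by simp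
  have S0: "0 \<le> S" using TS T by simp
  show Y0S: "Y0 S = T"
  proof (rule ccontr)
    assume ne: "Y0 S \<noteq> T"
    have "Y0 S \<in> {0..T}" "Y0 S + N (Y0 S) = S" using R[of S] S0 by auto
    moreover have "N (Y0 S) \<le> N T" using mono[of "Y0 S" T] calculation by auto
    ultimately show False using ne ST by auto
  qed
  show shm: "b - a \<le> sh T N b - sh T N a" if "0 \<le> a" "a \<le> b" for a b
  proof -
    have "N (clamp T a) \<le> N (clamp T b)"
      by (rule mono) (use clamp_mono[OF that(2), of T] clamp_in[of T a] clamp_in[of T b] T in auto)
    then show ?thesis by (simp add: sh_def)
  qed
  show shY: "0 \<le> Yh S Y0 s \<and> sh T N (Yh S Y0 s) = s" if s: "0 \<le> s" for s
  proof (cases "s \<le> S")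
    case True
    then have c: "clamp S s = s" using s by (intro clamp_id) auto
    have "Y0 s \<in> {0..T}" "Y0 s + N (Y0 s) = s" using R[of s] s True by auto
    then show ?thesis by (simp add: Yh_def sh_def c clamp_id)
  next
    case False
    then have c: "clamp S s = S" using S0 by (auto simp: clamp_def)
    have "Yh S Y0 s = T + (s - S)" by (simp add: Yh_def c Y0S)
    moreover have "clamp T (T + (s - S)) = T" using False T by (auto simp: clamp_def)
    ultimately show ?thesis using T False ST by (simp add: sh_def)
  qed
  have shinj: "p = q" if "0 \<le> p" "0 \<le> q" "sh T N p = sh T N q" for p q
  proof (cases "p \<le> q")
    case True then show ?thesis using shm[of p q] that by linarith
  next
    case False then show ?thesis using shm[of q p] that by linarith
  qed
  have sh00: "sh T N 0 = 0" using N0 T by (simp add: sh_def clamp_def)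
  have sh0: "0 \<le> sh T N t" if "0 \<le> t" for t using shm[of 0 t] that sh00 by linarith
  show "Yh S Y0 (sh T N t) = t" if "0 \<le> t" for t
    using shY[OF sh0[OF that]] shinj[of "Yh S Y0 (sh T N t)" t] that by auto
  show "\<bar>Yh S Y0 s - Yh S Y0 s'\<bar> \<le> \<bar>s - s'\<bar>" if "0 \<le> s" "0 \<le> s'" for s s'
  proof -
    have a: "0 \<le> Yh S Y0 s" "sh T N (Yh S Y0 s) = s" using shY[OF that(1)] by auto
    have b: "0 \<le> Yh S Y0 s'" "sh T N (Yh S Y0 s') = s'" using shY[OF that(2)] by auto
    show ?thesis
    proof (cases "Yh S Y0 s \<le> Yh S Y0 s'")
      case True then show ?thesis using shm[of "Yh S Y0 s" "Yh S Y0 s'"] a b by linarith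
    next
      case False then show ?thesis using shm[of "Yh S Y0 s'" "Yh S Y0 s"] a b by linarith
    qed
  qed
  show "cext T (\<lambda>t. (x t, N t)) t = (x (clamp T t), sh T N t - t)" for t
    by (simp add: cext_clamp sh_def)
  show "cext S (\<lambda>s. (y s, s - Y0 s)) s = (x (clamp T (Yh S Y0 s)), s - Yh S Y0 s)" if s: "0 \<le> s" for s
  proof (cases "s \<le> S")
    case True
    then have c: "clamp S s = s" using s by (intro clamp_id) auto
    have "Y0 s \<in> {0..T}" "y s = x (Y0 s)" using R[of s] s True by auto
    then show ?thesis by (simp add: Yh_def cext_clamp c clamp_id)
  next
    case False
    then have c: "clamp S s = S" using S0 by (auto simp: clamp_def)
    have "Yh S Y0 s = T + (s - S)" by (simp add: Yh_def c Y0S)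
    moreover have "clamp T (T + (s - S)) = T" using False T by (auto simp: clamp_def)
    moreover have "y S = x T" using R[of S] S0 Y0S by auto
    ultimately show ?thesis using T False by (simp add: cext_clamp c Y0S)
  qed
qed

lemma rel_sh_ge:
  assumes r: "rel T x N S y Y0" and t: "0 \<le> t"
  shows "t \<le> sh T N t"
proof -
  have N0: "N 0 = 0" and T: "0 < T" using r unfolding rel_def by blast+
  have "sh T N 0 = 0" using N0 T by (simp add: sh_def clamp_def)
  then show ?thesis using rel_facts(4)[OF r order.refl t] by linarith
qed

lemma unif_clamp:
  fixes z :: "real \<Rightarrow> 'a::real_normed_vector"
  assumes "continuous_on {0..D} z" "e > 0"
  shows "\<exists>d>0. \<forall>a b. \<bar>a - b\<bar> < d \<longrightarrow> norm (z (clamp D a) - z (clamp D b)) < e"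
proof (cases "0 \<le> D")
  case True
  have "uniformly_continuous_on {0..D} z" by (rule compact_uniformly_continuous[OF assms(1)]) auto
  then obtain d where d: "d > 0" "\<And>p q. p \<in> {0..D} \<Longrightarrow> q \<in> {0..D} \<Longrightarrow> dist q p < d \<Longrightarrow> dist (z q) (z p) < e"
    using assms(2) unfolding uniformly_continuous_on_def by metis
  show ?thesis
  proof (intro exI[of _ d] conjI allI impI)
    fix a b :: real assume "\<bar>a - b\<bar> < d"
    then have "dist (clamp D a) (clamp D b) < d" using clamp_lip[of D a b] by (simp add: dist_real_def)
    then have "dist (z (clamp D a)) (z (clamp D b)) < e" using d(2) clamp_in True by blast
    then show "norm (z (clamp D a) - z (clamp D b)) < e" by (simp add: dist_norm)
  qed (rule d(1))
next
  case False
  then have "clamp D a = 0" for a by (simp add: clamp_def)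
  then show ?thesis using assms(2) by (intro exI[of _ 1]) auto
qed

lemma cext_bounded:
  fixes z :: "real \<Rightarrow> 'a::real_normed_vector"
  assumes "continuous_on {0..D} z" "0 \<le> D"
  shows "\<exists>C. \<forall>t. norm (cext D z t) \<le> C"
proof -
  have "compact (z ` {0..D})" by (rule compact_continuous_image[OF assms(1)]) auto
  then obtain C where "\<forall>v\<in>z ` {0..D}. norm v \<le> C" using compact_imp_bounded bounded_iff by metis
  then have "\<forall>t. norm (cext D z t) \<le> C" using clamp_in[OF assms(2)] by (auto simp: cext_clamp)
  then show ?thesis by blast
qed

lemma sup_le:
  fixes F :: "real \<Rightarrow> real"
  assumes "\<And>t. 0 \<le> t \<Longrightarrow> F t \<le> c"
  shows "(SUP t\<in>{0..}. F t) \<le> c"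
  by (rule cSUP_least) (use assms in auto)

lemma le_sup:
  fixes F :: "real \<Rightarrow> real"
  assumes "\<And>t. F t \<le> C" "0 \<le> t"
  shows "F t \<le> (SUP t\<in>{0..}. F t)"
proof (rule cSUP_upper)
  show "bdd_above (F ` {0..})" by (rule bdd_aboveI[of _ C]) (use assms in auto)
qed (use assms in auto)

lemma rel_cont_pair: "rel T x N S y Y0 \<Longrightarrow> continuous_on {0..T} (\<lambda>t. (x t, N t))"
  unfolding rel_def by (blast intro: continuous_on_Pair)

lemma dproc_parts:
  fixes z1 z2 :: "real \<Rightarrow> 'a::real_normed_vector"
  assumes d: "dproc a D1 z1 b D2 z2 < \<delta>"
    and b1: "continuous_on {0..D1} z1" "0 \<le> D1" and b2: "continuous_on {0..D2} z2" "0 \<le> D2"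
  shows "\<bar>a - b\<bar> < \<delta>" "\<And>t. 0 \<le> t \<Longrightarrow> norm (cext D1 z1 t - cext D2 z2 t) < \<delta>"
proof -
  obtain C1 where C1: "\<And>t. norm (cext D1 z1 t) \<le> C1" using cext_bounded[OF b1] by blast
  obtain C2 where C2: "\<And>t. norm (cext D2 z2 t) \<le> C2" using cext_bounded[OF b2] by blast
  have bnd: "norm (cext D1 z1 t - cext D2 z2 t) \<le> C1 + C2" for t
    using norm_triangle_ineq4[of "cext D1 z1 t" "cext D2 z2 t"] C1[of t] C2[of t] by linarith
  have le: "norm (cext D1 z1 t - cext D2 z2 t) \<le> (SUP t\<in>{0..}. norm (cext D1 z1 t - cext D2 z2 t))" if "0 \<le> t" for t
    by (rule le_sup[OF bnd that])
  have "0 \<le> (SUP t\<in>{0..}. norm (cext D1 z1 t - cext D2 z2 t))"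
    using le[of 0] norm_ge_zero[of "cext D1 z1 0 - cext D2 z2 0"] by linarith
  then show "\<bar>a - b\<bar> < \<delta>" using d by (simp add: dproc_def)
  show "norm (cext D1 z1 t - cext D2 z2 t) < \<delta>" if "0 \<le> t" for t
    using le[OF that] d by (simp add: dproc_def)
qed

lemma dproc_bound:
  fixes z1 z2 :: "real \<Rightarrow> 'a::real_normed_vector"
  assumes "\<bar>a - b\<bar> < e1" "\<And>t. 0 \<le> t \<Longrightarrow> norm (cext D1 z1 t - cext D2 z2 t) \<le> e2"
  shows "dproc a D1 z1 b D2 z2 < e1 + e2"
  using sup_le[of "\<lambda>t. norm (cext D1 z1 t - cext D2 z2 t)" e2] assms by (simp add: dproc_def)

lemma cont_cong: "continuous_on A f \<Longrightarrow> (\<And>x. x \<in> A \<Longrightarrow> f x = g x) \<Longrightarrow> continuous_on A g"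
  using continuous_on_cong[of A A f g] by simp

lemma rel_cont_st: "rel T x N S y Y0 \<Longrightarrow> continuous_on {0..S} (\<lambda>s. (y s, s - Y0 s))"
proof -
  assume r: "rel T x N S y Y0"
  have xc: "continuous_on {0..T} x" and R: "\<And>s. s \<in> {0..S} \<Longrightarrow> Y0 s \<in> {0..T} \<and> y s = x (Y0 s)"
    using r unfolding rel_def by blast+
  have lip: "\<bar>Yh S Y0 s - Yh S Y0 s'\<bar> \<le> \<bar>s - s'\<bar>" if "0 \<le> s" "0 \<le> s'" for s s'
    using rel_facts(7)[OF r that] .
  have YY: "Yh S Y0 s = Y0 s" if "s \<in> {0..S}" for s by (simp add: Yh_def clamp_id[OF that])
  have "continuous_on {0..S} (Yh S Y0)"
    unfolding continuous_on_iff
  proof (intro ballI allI impI)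
    fix s e :: real assume "s \<in> {0..S}" "0 < e"
    then show "\<exists>d>0. \<forall>s'\<in>{0..S}. dist s' s < d \<longrightarrow> dist (Yh S Y0 s') (Yh S Y0 s) < e"
    proof (intro exI[of _ e] conjI ballI impI)
      fix s' assume "s' \<in> {0..S}" "dist s' s < e"
      then show "dist (Yh S Y0 s') (Yh S Y0 s) < e"
        using lip[of s' s] \<open>s \<in> {0..S}\<close> by (simp add: dist_real_def)
    qed (rule \<open>0 < e\<close>)
  qed
  then have Yc: "continuous_on {0..S} Y0" by (rule cont_cong) (rule YY)
  have "continuous_on {0..S} (x \<circ> Y0)"
  proof (rule continuous_on_compose[OF Yc])
    have "Y0 ` {0..S} \<subseteq> {0..T}" using R by auto
    then show "continuous_on (Y0 ` {0..S}) x" by (rule continuous_on_subset[OF xc])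
  qed
  then have yc: "continuous_on {0..S} y" by (rule cont_cong) (simp add: R)
  have "continuous_on {0..S} (\<lambda>s. s - Y0 s)" by (rule continuous_on_diff[OF continuous_on_id Yc])
  then show ?thesis by (rule continuous_on_Pair[OF yc])
qed

lemma dist_T2S:
  fixes xb :: "real \<Rightarrow> 'a::real_normed_vector"
  assumes rb: "rel Tb xb Nb Sb yb Y0b"
  shows "\<forall>\<epsilon>>0. \<exists>\<delta>>0. \<forall>T x N S y Y0. rel T x N S y Y0 \<and> dproc T T (\<lambda>t. (x t, N t)) Tb Tb (\<lambda>t. (xb t, Nb t)) < \<delta> \<longrightarrow>
            dproc T S (\<lambda>s. (y s, s - Y0 s)) Tb Sb (\<lambda>s. (yb s, s - Y0b s)) < \<epsilon>"
proof (intro allI impI)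
  fix \<epsilon> :: real assume \<epsilon>: "0 < \<epsilon>"
  have xbc: "continuous_on {0..Tb} xb" using rb unfolding rel_def by blast
  obtain \<eta> where \<eta>: "\<eta> > 0" "\<And>a b. \<bar>a - b\<bar> < \<eta> \<Longrightarrow> norm (xb (clamp Tb a) - xb (clamp Tb b)) < \<epsilon>/4"
    using unif_clamp[OF xbc, of "\<epsilon>/4"] \<epsilon> by auto
  show "\<exists>\<delta>>0. \<forall>T x N S y Y0. rel T x N S y Y0 \<and> dproc T T (\<lambda>t. (x t, N t)) Tb Tb (\<lambda>t. (xb t, Nb t)) < \<delta> \<longrightarrow>
            dproc T S (\<lambda>s. (y s, s - Y0 s)) Tb Sb (\<lambda>s. (yb s, s - Y0b s)) < \<epsilon>"
  proof (intro exI[of _ "min (\<epsilon>/4) \<eta>"] conjI allI impI)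
    show "0 < min (\<epsilon>/4) \<eta>" using \<epsilon> \<eta> by simp
    fix T x N S y Y0 assume H: "rel T x N S y Y0 \<and> dproc T T (\<lambda>t. (x t, N t)) Tb Tb (\<lambda>t. (xb t, Nb t)) < min (\<epsilon>/4) \<eta>"
    then have r: "rel T x N S y Y0" by simp
    have T0: "0 \<le> T" using rel_facts(1)[OF r] by simp
    have Tb0: "0 \<le> Tb" using rel_facts(1)[OF rb] by simp
    note dp = dproc_parts[OF conjunct2[OF H] rel_cont_pair[OF r] T0 rel_cont_pair[OF rb] Tb0]
    have pt: "norm (x (clamp T t) - xb (clamp Tb t)) < min (\<epsilon>/4) \<eta> \<and> \<bar>sh T N t - sh Tb Nb t\<bar> < min (\<epsilon>/4) \<eta>"
      if "0 \<le> t" for t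
    proof -
      have "norm ((x (clamp T t) - xb (clamp Tb t), sh T N t - sh Tb Nb t)) < min (\<epsilon>/4) \<eta>"
        using dp(2)[OF that] by (simp add: rel_facts(8)[OF r] rel_facts(8)[OF rb])
      moreover have "norm (x (clamp T t) - xb (clamp Tb t)) \<le> norm ((x (clamp T t) - xb (clamp Tb t), sh T N t - sh Tb Nb t))"
        by (rule norm_fst_le)
      moreover have "norm (sh T N t - sh Tb Nb t) \<le> norm ((x (clamp T t) - xb (clamp Tb t), sh T N t - sh Tb Nb t))"
        by (rule norm_snd_le)
      ultimately show ?thesis by (simp only: real_norm_def) linarith
    qed
    have "norm (cext S (\<lambda>s. (y s, s - Y0 s)) s - cext Sb (\<lambda>s. (yb s, s - Y0b s)) s) \<le> 3 * \<epsilon> / 4"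
      if s: "0 \<le> s" for s
    proof -
      define t where "t = Yh S Y0 s"
      define tb where "tb = Yh Sb Y0b s"
      have t0: "0 \<le> t" and st: "sh T N t = s" using rel_facts(5)[OF r s] by (auto simp: t_def)
      have tb0: "0 \<le> tb" using rel_facts(5)[OF rb s] by (auto simp: tb_def)
      have shb0: "0 \<le> sh Tb Nb t" using rel_sh_ge[OF rb t0] t0 by linarith
      have "\<bar>t - tb\<bar> = \<bar>Yh Sb Y0b (sh Tb Nb t) - Yh Sb Y0b s\<bar>" using rel_facts(6)[OF rb t0] by (simp add: tb_def)
      also have "\<dots> \<le> \<bar>sh Tb Nb t - s\<bar>" by (rule rel_facts(7)[OF rb shb0 s])
      also have "\<dots> < min (\<epsilon>/4) \<eta>" using pt[OF t0] st by linarith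
      finally have ttb: "\<bar>t - tb\<bar> < min (\<epsilon>/4) \<eta>" .
      have e1: "norm (cext S (\<lambda>s. (y s, s - Y0 s)) s - cext Sb (\<lambda>s. (yb s, s - Y0b s)) s)
            = norm ((x (clamp T t) - xb (clamp Tb tb), tb - t))"
        using rel_facts(9)[OF r s] rel_facts(9)[OF rb s] by (simp add: t_def tb_def)
      have e2: "norm ((x (clamp T t) - xb (clamp Tb tb), tb - t)) \<le> norm (x (clamp T t) - xb (clamp Tb tb)) + norm (tb - t)"
        by (rule norm_Pair_le)
      have e3: "norm (x (clamp T t) - xb (clamp Tb tb)) \<le> norm (x (clamp T t) - xb (clamp Tb t)) + norm (xb (clamp Tb t) - xb (clamp Tb tb))"
        using norm_triangle_ineq[of "x (clamp T t) - xb (clamp Tb t)" "xb (clamp Tb t) - xb (clamp Tb tb)"] by simp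
      have a: "norm (x (clamp T t) - xb (clamp Tb t)) < \<epsilon>/4" using pt[OF t0] by simp
      have b: "norm (xb (clamp Tb t) - xb (clamp Tb tb)) < \<epsilon>/4" using \<eta>(2)[of t tb] ttb by simp
      have c: "norm (tb - t) < \<epsilon>/4" using ttb by (simp add: abs_minus_commute)
      show ?thesis using e1 e2 e3 a b c by linarith
    qed
    then have "dproc T S (\<lambda>s. (y s, s - Y0 s)) Tb Sb (\<lambda>s. (yb s, s - Y0b s)) < \<epsilon>/4 + 3 * \<epsilon> / 4"
      using dp(1) by (intro dproc_bound) auto
    then show "dproc T S (\<lambda>s. (y s, s - Y0 s)) Tb Sb (\<lambda>s. (yb s, s - Y0b s)) < \<epsilon>" by simp
  qed
qed

lemma dist_S2T:
  fixes xb :: "real \<Rightarrow> 'a::real_normed_vector"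
  assumes rb: "rel Tb xb Nb Sb yb Y0b"
  shows "\<forall>\<epsilon>>0. \<exists>\<delta>>0. \<forall>T x N S y Y0. rel T x N S y Y0 \<and> dproc T S (\<lambda>s. (y s, s - Y0 s)) Tb Sb (\<lambda>s. (yb s, s - Y0b s)) < \<delta> \<longrightarrow>
            dproc T T (\<lambda>t. (x t, N t)) Tb Tb (\<lambda>t. (xb t, Nb t)) < \<epsilon>"
proof (intro allI impI)
  fix \<epsilon> :: real assume \<epsilon>: "0 < \<epsilon>"
  have xbc: "continuous_on {0..Tb} xb" and Nbc: "continuous_on {0..Tb} Nb" using rb unfolding rel_def by blast+
  obtain \<eta>2 where \<eta>2: "\<eta>2 > 0" "\<And>a b. \<bar>a - b\<bar> < \<eta>2 \<Longrightarrow> norm (xb (clamp Tb a) - xb (clamp Tb b)) < \<epsilon>/4"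
    using unif_clamp[OF xbc, of "\<epsilon>/4"] \<epsilon> by auto
  define e1 where "e1 = min (\<epsilon>/8) (\<eta>2/2)"
  have e1: "0 < e1" using \<epsilon> \<eta>2 by (simp add: e1_def)
  obtain \<eta>1 where \<eta>1: "\<eta>1 > 0" "\<And>a b. \<bar>a - b\<bar> < \<eta>1 \<Longrightarrow> norm (Nb (clamp Tb a) - Nb (clamp Tb b)) < e1"
    using unif_clamp[OF Nbc e1] by auto
  define \<delta> where "\<delta> = min e1 \<eta>1"
  have \<delta>: "0 < \<delta>" using e1 \<eta>1 by (simp add: \<delta>_def)
  show "\<exists>\<delta>>0. \<forall>T x N S y Y0. rel T x N S y Y0 \<and> dproc T S (\<lambda>s. (y s, s - Y0 s)) Tb Sb (\<lambda>s. (yb s, s - Y0b s)) < \<delta> \<longrightarrow>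
            dproc T T (\<lambda>t. (x t, N t)) Tb Tb (\<lambda>t. (xb t, Nb t)) < \<epsilon>"
  proof (intro exI[of _ \<delta>] conjI allI impI)
    show "0 < \<delta>" by (rule \<delta>)
    fix T x N S y Y0 assume H: "rel T x N S y Y0 \<and> dproc T S (\<lambda>s. (y s, s - Y0 s)) Tb Sb (\<lambda>s. (yb s, s - Y0b s)) < \<delta>"
    then have r: "rel T x N S y Y0" by simp
    have S0: "0 \<le> S" using rel_facts(1,2)[OF r] by simp
    have Sb0: "0 \<le> Sb" using rel_facts(1,2)[OF rb] by simp
    note dp = dproc_parts[OF conjunct2[OF H] rel_cont_st[OF r] S0 rel_cont_st[OF rb] Sb0]
    have pt: "norm (x (clamp T (Yh S Y0 s)) - xb (clamp Tb (Yh Sb Y0b s))) < \<delta> \<and> \<bar>Yh Sb Y0b s - Yh S Y0 s\<bar> < \<delta>"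
      if "0 \<le> s" for s
    proof -
      have n: "norm ((x (clamp T (Yh S Y0 s)) - xb (clamp Tb (Yh Sb Y0b s)), Yh Sb Y0b s - Yh S Y0 s)) < \<delta>"
        using dp(2)[OF that] rel_facts(9)[OF r that] rel_facts(9)[OF rb that] by simp
      have "norm (x (clamp T (Yh S Y0 s)) - xb (clamp Tb (Yh Sb Y0b s))) \<le> norm ((x (clamp T (Yh S Y0 s)) - xb (clamp Tb (Yh Sb Y0b s)), Yh Sb Y0b s - Yh S Y0 s))"
        by (rule norm_fst_le)
      moreover have "norm (Yh Sb Y0b s - Yh S Y0 s) \<le> norm ((x (clamp T (Yh S Y0 s)) - xb (clamp Tb (Yh Sb Y0b s)), Yh Sb Y0b s - Yh S Y0 s))"
        by (rule norm_snd_le)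
      ultimately show ?thesis using n by (simp only: real_norm_def) linarith
    qed
    have "norm (cext T (\<lambda>t. (x t, N t)) t - cext Tb (\<lambda>t. (xb t, Nb t)) t) \<le> 3 * \<epsilon> / 4"
      if t: "0 \<le> t" for t
    proof -
      define s where "s = sh T N t"
      define sb where "sb = sh Tb Nb t"
      have s0: "0 \<le> s" using rel_sh_ge[OF r t] t by (simp add: s_def)
      have sb0: "0 \<le> sb" using rel_sh_ge[OF rb t] t by (simp add: sb_def)
      have Ys: "Yh S Y0 s = t" unfolding s_def by (rule rel_facts(6)[OF r t])
      have Ysb: "Yh Sb Y0b sb = t" unfolding sb_def by (rule rel_facts(6)[OF rb t])
      have p1: "norm (x (clamp T t) - xb (clamp Tb (Yh Sb Y0b s))) < \<delta>" and p2: "\<bar>Yh Sb Y0b s - t\<bar> < \<delta>"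
        using pt[OF s0] Ys by auto
      have Yb0: "0 \<le> Yh Sb Y0b s" and shY: "sh Tb Nb (Yh Sb Y0b s) = s" using rel_facts(5)[OF rb s0] by auto
      have "\<bar>s - sb\<bar> = \<bar>(Yh Sb Y0b s - t) + (Nb (clamp Tb (Yh Sb Y0b s)) - Nb (clamp Tb t))\<bar>"
        using shY by (simp add: sb_def sh_def algebra_simps)
      also have "\<dots> \<le> \<bar>Yh Sb Y0b s - t\<bar> + \<bar>Nb (clamp Tb (Yh Sb Y0b s)) - Nb (clamp Tb t)\<bar>" by (rule abs_triangle_ineq)
      also have "\<bar>Nb (clamp Tb (Yh Sb Y0b s)) - Nb (clamp Tb t)\<bar> < e1"
        using \<eta>1(2)[of "Yh Sb Y0b s" t] p2 by (simp add: \<delta>_def)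
      finally have ssb: "\<bar>s - sb\<bar> < \<delta> + e1" using p2 by linarith
      have b1: "\<delta> \<le> \<epsilon>/8" "e1 \<le> \<epsilon>/8" "\<delta> \<le> \<eta>2/2" "e1 \<le> \<eta>2/2" by (auto simp: \<delta>_def e1_def)
      have ssb2: "\<bar>s - sb\<bar> < \<eta>2" and ssb3: "\<bar>s - sb\<bar> < \<epsilon>/4"
        using ssb b1 by linarith+
      have "\<bar>Yh Sb Y0b s - Yh Sb Y0b sb\<bar> \<le> \<bar>s - sb\<bar>" by (rule rel_facts(7)[OF rb s0 sb0])
      then have p3: "norm (xb (clamp Tb (Yh Sb Y0b s)) - xb (clamp Tb t)) < \<epsilon>/4"
        using \<eta>2(2)[of "Yh Sb Y0b s" "Yh Sb Y0b sb"] ssb2 Ysb by simp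
      have e1': "norm (cext T (\<lambda>t. (x t, N t)) t - cext Tb (\<lambda>t. (xb t, Nb t)) t)
            = norm ((x (clamp T t) - xb (clamp Tb t), s - sb))"
        using rel_facts(8)[OF r, of t] rel_facts(8)[OF rb, of t] by (simp add: s_def sb_def)
      have e2: "norm ((x (clamp T t) - xb (clamp Tb t), s - sb)) \<le> norm (x (clamp T t) - xb (clamp Tb t)) + norm (s - sb)"
        by (rule norm_Pair_le)
      have e3: "norm (x (clamp T t) - xb (clamp Tb t)) \<le> norm (x (clamp T t) - xb (clamp Tb (Yh Sb Y0b s))) + norm (xb (clamp Tb (Yh Sb Y0b s)) - xb (clamp Tb t))"
        using norm_triangle_ineq[of "x (clamp T t) - xb (clamp Tb (Yh Sb Y0b s))" "xb (clamp Tb (Yh Sb Y0b s)) - xb (clamp Tb t)"] by simp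
      have d8: "\<delta> \<le> \<epsilon>/8" by (simp add: \<delta>_def e1_def)
      have nn: "norm (s - sb) = \<bar>s - sb\<bar>" by simp
      show ?thesis using e1' e2 e3 p1 p3 ssb3 d8 nn by linarith
    qed
    note ptw = this
    have "\<delta> \<le> \<epsilon>/8" by (simp add: \<delta>_def e1_def)
    then have TT: "\<bar>T - Tb\<bar> < \<epsilon>/4" using dp(1) \<epsilon> by linarith
    have "dproc T T (\<lambda>t. (x t, N t)) Tb Tb (\<lambda>t. (xb t, Nb t)) < \<epsilon>/4 + 3 * \<epsilon> / 4"
      by (rule dproc_bound[OF TT ptw])
    then show "dproc T T (\<lambda>t. (x t, N t)) Tb Tb (\<lambda>t. (xb t, Nb t)) < \<epsilon>" by simp
  qed
qed

theorem mainTheorem2: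
  fixes f :: "real^'n \<Rightarrow> real^'n" and g :: "'m::finite \<Rightarrow> real^'n \<Rightarrow> real^'n"
    and x0 :: "real^'n" and \<Psi> :: "real \<times> (real^'n) \<Rightarrow> real"
    and r1 r2 :: nat and \<phi> \<psi> :: "nat \<Rightarrow> real \<times> (real^'n) \<Rightarrow> real"
    and Tb :: real and ub :: "real \<Rightarrow> real^'m" and xb :: "real \<Rightarrow> real^'n"
  assumes f_smooth: "smooth_field f"
    and g_smooth: "\<And>i. smooth_field (g i)"
    and Psi_C1: "C1_fun \<Psi>"
    and phi_C1: "\<And>i. i < r1 \<Longrightarrow> C1_fun (\<phi> i)"
    and psi_C1: "\<And>j. j < r2 \<Longrightarrow> C1_fun (\<psi> j)"
    and feas: "strict_feasible f g x0 (target r1 \<phi> r2 \<psi>) Tb ub xb"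
  defines "Sb \<equiv> sigma_I ub Tb"
    and "y0b \<equiv> inv_into {0..Tb} (sigma_I ub)"
    and "w0b \<equiv> (\<lambda>s. inverse (1 + norm (ub (inv_into {0..Tb} (sigma_I ub) s))))"
    and "wb \<equiv> (\<lambda>s. inverse (1 + norm (ub (inv_into {0..Tb} (sigma_I ub) s)))
                     *\<^sub>R ub (inv_into {0..Tb} (sigma_I ub) s))"
    and "yb \<equiv> (\<lambda>s. xb (inv_into {0..Tb} (sigma_I ub) s))"
  shows "(strict_Linf_local_min f g x0 (target r1 \<phi> r2 \<psi>) \<Psi> Tb ub xb \<longleftrightarrow>
           (\<exists>\<delta>'>0. \<forall>S w0 w y0 y.
              st_feasible f g x0 (target r1 \<phi> r2 \<psi>) S w0 w y0 y \<and>
              (AE s in lebesgue_on {0..S}. w0 s > 0) \<and>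
              dproc (y0 S) S (\<lambda>s. (y s, nu w s)) (y0b Sb) Sb (\<lambda>s. (yb s, nu wb s)) < \<delta>'
              \<longrightarrow> \<Psi> (y0b Sb, yb Sb) \<le> \<Psi> (y0 S, y S)))
         \<and> \<Psi> (y0b Sb, yb Sb) = \<Psi> (Tb, xb Tb)"
proof -
  have fc: "continuous_on UNIV f" by (rule smooth_cont[OF f_smooth])
  have gc: "\<And>i. continuous_on UNIV (g i)" by (rule smooth_cont[OF g_smooth])
  have spb: "strict_process f g x0 Tb ub xb" and tgb: "(Tb, xb Tb) \<in> target r1 \<phi> r2 \<psi>"
    using feas by (auto simp: strict_feasible_def)
  obtain w0f wf Y0f yf where
      fw1: "st_process f g x0 (sigma_I ub Tb) w0f wf Y0f yf" and
      fw3: "Y0f (sigma_I ub Tb) = Tb" and fw4: "yf (sigma_I ub Tb) = xb Tb" and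
      relb: "rel Tb xb (nu ub) (sigma_I ub Tb) yf Y0f" and
      fw6: "\<forall>s\<in>{0..sigma_I ub Tb}. nu wf s = s - Y0f s \<and> Y0f s = inv_into {0..Tb} (sigma_I ub) s" and
      fw7: "\<forall>s\<in>{0..sigma_I ub Tb}. nu (\<lambda>s. inverse (1 + norm (ub (inv_into {0..Tb} (sigma_I ub) s))) *\<^sub>R ub (inv_into {0..Tb} (sigma_I ub) s)) s = s - Y0f s"
    using forward[OF fc gc spb] by blast
  have relb': "rel Tb xb (nu ub) Sb yf Y0f" using relb by (simp add: Sb_def)
  have Sb0: "0 \<le> Sb" using rel_facts(1,2)[OF relb'] by simp
  have y0bY: "y0b s = Y0f s" if "s \<in> {0..Sb}" for s using fw6 that by (simp add: y0b_def Sb_def)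
  have ybY: "yb s = yf s" if "s \<in> {0..Sb}" for s
  proof -
    have "yf s = xb (Y0f s)" using relb' that unfolding rel_def by blast
    then show ?thesis using y0bY[OF that] by (simp add: yb_def y0b_def)
  qed
  have nuwb: "nu wb s = s - Y0f s" if "s \<in> {0..Sb}" for s using fw7 that by (simp add: wb_def Sb_def)
  have y0bS: "y0b Sb = Tb" using y0bY[of Sb] Sb0 fw3 by (simp add: Sb_def)
  have ybS: "yb Sb = xb Tb" using ybY[of Sb] Sb0 fw4 by (simp add: Sb_def)
  have bareq: "\<Psi> (y0b Sb, yb Sb) = \<Psi> (Tb, xb Tb)" using y0bS ybS by simp
  have dcong: "dproc a D1 z1 b D2 z2 = dproc a D1 z1' b D2 z2'"
    if "0 \<le> D1" "0 \<le> D2" "\<And>t. t \<in> {0..D1} \<Longrightarrow> z1 t = z1' t" "\<And>t. t \<in> {0..D2} \<Longrightarrow> z2 t = z2' t"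
    for a b D1 D2 and z1 z1' z2 z2' :: "real \<Rightarrow> (real^'n) \<times> real"
    unfolding dproc_def cext_clamp using that clamp_in[OF that(1)] clamp_in[OF that(2)] by simp
  have stdist: "dproc (y0 S) S (\<lambda>s. (y s, nu w s)) (y0b Sb) Sb (\<lambda>s. (yb s, nu wb s))
        = dproc (y0 S) S (\<lambda>s. (y s, s - y0 s)) Tb Sb (\<lambda>s. (yf s, s - Y0f s))"
    if "0 \<le> S" "\<And>s. s \<in> {0..S} \<Longrightarrow> nu w s = s - y0 s" for S y0 y and w :: "real \<Rightarrow> real^'m"
    unfolding y0bS by (rule dcong) (use that Sb0 ybY nuwb in auto)
  have "strict_Linf_local_min f g x0 (target r1 \<phi> r2 \<psi>) \<Psi> Tb ub xb \<longleftrightarrow>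
           (\<exists>\<delta>'>0. \<forall>S w0 w y0 y.
              st_feasible f g x0 (target r1 \<phi> r2 \<psi>) S w0 w y0 y \<and>
              (AE s in lebesgue_on {0..S}. w0 s > 0) \<and>
              dproc (y0 S) S (\<lambda>s. (y s, nu w s)) (y0b Sb) Sb (\<lambda>s. (yb s, nu wb s)) < \<delta>'
              \<longrightarrow> \<Psi> (y0b Sb, yb Sb) \<le> \<Psi> (y0 S, y S))"
  proof
    assume "strict_Linf_local_min f g x0 (target r1 \<phi> r2 \<psi>) \<Psi> Tb ub xb"
    then obtain \<delta> where \<delta>: "\<delta> > 0" and mn: "\<And>T u x. strict_feasible f g x0 (target r1 \<phi> r2 \<psi>) T u x \<Longrightarrow>
        dproc T T (\<lambda>t. (x t, nu u t)) Tb Tb (\<lambda>t. (xb t, nu ub t)) < \<delta> \<Longrightarrow> \<Psi> (Tb, xb Tb) \<le> \<Psi> (T, x T)"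
      unfolding strict_Linf_local_min_def by blast
    obtain \<delta>' where \<delta>': "\<delta>' > 0" and D: "\<And>T x N S y Y0. rel T x N S y Y0 \<Longrightarrow>
        dproc T S (\<lambda>s. (y s, s - Y0 s)) Tb Sb (\<lambda>s. (yf s, s - Y0f s)) < \<delta>' \<Longrightarrow>
        dproc T T (\<lambda>t. (x t, N t)) Tb Tb (\<lambda>t. (xb t, nu ub t)) < \<delta>"
      using dist_S2T[OF relb'] \<delta> by meson
    show "\<exists>\<delta>'>0. \<forall>S w0 w y0 y.
              st_feasible f g x0 (target r1 \<phi> r2 \<psi>) S w0 w y0 y \<and>
              (AE s in lebesgue_on {0..S}. w0 s > 0) \<and>
              dproc (y0 S) S (\<lambda>s. (y s, nu w s)) (y0b Sb) Sb (\<lambda>s. (yb s, nu wb s)) < \<delta>'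
              \<longrightarrow> \<Psi> (y0b Sb, yb Sb) \<le> \<Psi> (y0 S, y S)"
    proof (intro exI[of _ \<delta>'] conjI allI impI)
      show "0 < \<delta>'" by (rule \<delta>')
      fix S w0 w y0 y
      assume H: "st_feasible f g x0 (target r1 \<phi> r2 \<psi>) S w0 w y0 y \<and>
              (AE s in lebesgue_on {0..S}. w0 s > 0) \<and>
              dproc (y0 S) S (\<lambda>s. (y s, nu w s)) (y0b Sb) Sb (\<lambda>s. (yb s, nu wb s)) < \<delta>'"
      have stp: "st_process f g x0 S w0 w y0 y" and tg: "(y0 S, y S) \<in> target r1 \<phi> r2 \<psi>"
        using H by (auto simp: st_feasible_def)
      have pos: "AE s in lebesgue_on {0..S}. w0 s > 0" using H by simp
      obtain u x where b1: "strict_process f g x0 (y0 S) u x" and b2: "x (y0 S) = y S"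
        and b3: "rel (y0 S) x (nu u) S y y0" and b4: "\<forall>s\<in>{0..S}. nu w s = s - y0 s"
        using backward[OF fc gc stp pos] by blast
      have S0: "0 \<le> S" using rel_facts(1,2)[OF b3] by simp
      have "dproc (y0 S) S (\<lambda>s. (y s, s - y0 s)) Tb Sb (\<lambda>s. (yf s, s - Y0f s)) < \<delta>'"
        using H stdist[OF S0, of w y0 y] b4 by simp
      then have "dproc (y0 S) (y0 S) (\<lambda>t. (x t, nu u t)) Tb Tb (\<lambda>t. (xb t, nu ub t)) < \<delta>"
        by (rule D[OF b3])
      moreover have "strict_feasible f g x0 (target r1 \<phi> r2 \<psi>) (y0 S) u x"
        using b1 b2 tg by (simp add: strict_feasible_def)
      ultimately have "\<Psi> (Tb, xb Tb) \<le> \<Psi> (y0 S, x (y0 S))" using mn by blast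
      then show "\<Psi> (y0b Sb, yb Sb) \<le> \<Psi> (y0 S, y S)" using bareq b2 by simp
    qed
  next
    assume "\<exists>\<delta>'>0. \<forall>S w0 w y0 y.
              st_feasible f g x0 (target r1 \<phi> r2 \<psi>) S w0 w y0 y \<and>
              (AE s in lebesgue_on {0..S}. w0 s > 0) \<and>
              dproc (y0 S) S (\<lambda>s. (y s, nu w s)) (y0b Sb) Sb (\<lambda>s. (yb s, nu wb s)) < \<delta>'
              \<longrightarrow> \<Psi> (y0b Sb, yb Sb) \<le> \<Psi> (y0 S, y S)"
    then obtain \<delta>' where \<delta>': "\<delta>' > 0" and mn: "\<And>S w0 w y0 y.
              st_feasible f g x0 (target r1 \<phi> r2 \<psi>) S w0 w y0 y \<Longrightarrow>
              (AE s in lebesgue_on {0..S}. w0 s > 0) \<Longrightarrow>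
              dproc (y0 S) S (\<lambda>s. (y s, nu w s)) (y0b Sb) Sb (\<lambda>s. (yb s, nu wb s)) < \<delta>'
              \<Longrightarrow> \<Psi> (y0b Sb, yb Sb) \<le> \<Psi> (y0 S, y S)"
      by blast
    obtain \<delta> where \<delta>: "\<delta> > 0" and D: "\<And>T x N S y Y0. rel T x N S y Y0 \<Longrightarrow>
        dproc T T (\<lambda>t. (x t, N t)) Tb Tb (\<lambda>t. (xb t, nu ub t)) < \<delta> \<Longrightarrow>
        dproc T S (\<lambda>s. (y s, s - Y0 s)) Tb Sb (\<lambda>s. (yf s, s - Y0f s)) < \<delta>'"
      using dist_T2S[OF relb'] \<delta>' by meson
    show "strict_Linf_local_min f g x0 (target r1 \<phi> r2 \<psi>) \<Psi> Tb ub xb"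
      unfolding strict_Linf_local_min_def
    proof (intro conjI exI[of _ \<delta>] allI impI)
      show "strict_feasible f g x0 (target r1 \<phi> r2 \<psi>) Tb ub xb" by (rule feas)
      show "0 < \<delta>" by (rule \<delta>)
      fix T u x
      assume H: "strict_feasible f g x0 (target r1 \<phi> r2 \<psi>) T u x \<and>
        dproc T T (\<lambda>t. (x t, nu u t)) Tb Tb (\<lambda>t. (xb t, nu ub t)) < \<delta>"
      have sp: "strict_process f g x0 T u x" and tg: "(T, x T) \<in> target r1 \<phi> r2 \<psi>"
        using H by (auto simp: strict_feasible_def)
      obtain w0 w y0 y where
        f1: "st_process f g x0 (sigma_I u T) w0 w y0 y" and f2: "\<forall>s. 0 < w0 s" and
        f3: "y0 (sigma_I u T) = T" and f4: "y (sigma_I u T) = x T" and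
        f5: "rel T x (nu u) (sigma_I u T) y y0" and
        f6: "\<forall>s\<in>{0..sigma_I u T}. nu w s = s - y0 s \<and> y0 s = inv_into {0..T} (sigma_I u) s"
        using forward[OF fc gc sp] by blast
      define S where "S = sigma_I u T"
      have S0: "0 \<le> S" using rel_facts(1,2)[OF f5] by (simp add: S_def)
      have "dproc T S (\<lambda>s. (y s, s - y0 s)) Tb Sb (\<lambda>s. (yf s, s - Y0f s)) < \<delta>'"
        using D[OF f5] H by (simp add: S_def)
      then have dd: "dproc (y0 S) S (\<lambda>s. (y s, nu w s)) (y0b Sb) Sb (\<lambda>s. (yb s, nu wb s)) < \<delta>'"
        using stdist[OF S0, of w y0 y] f6 f3 by (simp add: S_def)
      have sf: "st_feasible f g x0 (target r1 \<phi> r2 \<psi>) S w0 w y0 y"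
        using f1 f3 f4 tg by (simp add: st_feasible_def S_def)
      have ae: "AE s in lebesgue_on {0..S}. w0 s > 0" using f2 by simp
      have "\<Psi> (y0b Sb, yb Sb) \<le> \<Psi> (y0 S, y S)" by (rule mn[OF sf ae dd])
      then show "\<Psi> (Tb, xb Tb) \<le> \<Psi> (T, x T)" using bareq f3 f4 by (simp add: S_def)
    qed
  qed
  then show ?thesis using bareq by simp
qed

end
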